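(* Let $p$ be an odd prime, $f:\mathbb{F}_p^n\to[0,1]$ with $\mathbb{E}[f]=\alpha$, and $\beta>0$. Let $H$ be a subspace of $\mathbb{F}_p^n$ with $|H|\ge 2\alpha/\beta$ and $b(H)\ge 2^{8+8C_p}\beta$. If $\lambda(H)<\beta$, then there is a subspace $H'\subseteq H$ with $\mathrm{Codim}(H')\le\mathrm{Codim}(H)+p^{\mathrm{Codim}(H)}\cdot 36/\beta^2$ and $b(H')/\beta>(b(H)/\beta)^{1+\tau_p}$, where $\tau_p=1/(2C_p)$.
   Context: For $f:\mathbb{F}_p^n\to[0,1]$ and a subspace $H$, $\mathrm{Codim}(H)=n-\dim H$; for $g\in\mathbb{F}_p^n$, $\alpha(H+g)=\mathbb{E}_{x\in H+g}f(x)$; the mean cube density is $b(H)=\mathbb{E}_{g\in\mathbb{F}_p^n}[\alpha(H+g)^3]$. The density of 3-APs with nonzero common difference in $H$ is $\lambda(H)=\mathbb{E}_{x\in\mathbb{F}_p^n}\mathbb{E}_{d\in H\setminus\{0\}}[f(x)f(x+d)f(x+2d)]$ (equivalently, the average over translates of $H$ of the density of nontrivial 3-APs of $f$ inside the translate). $C_p\ge1$ is a constant depending only on $p$ (with $C_p=\Theta(\log p)$) such that for every $m\ge1$ and every $X\subseteq\mathbb{F}_p^m$ with $|X|=xp^m$, the number of pairs $(a,d)\in(\mathbb{F}_p^m)^2$ with $a,a+d,a+2d\in X$ is at least $x^{C_p}p^{2m}$. *)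

theory Defs
  imports "HOL-Analysis.Analysis" "Berlekamp_Zassenhaus.Finite_Field"
begin

type_synonym ('p, 'n) Fpn = "('p mod_ring) ^ 'n"

definition Codim :: "('p::prime_card, 'n::finite) Fpn set \<Rightarrow> nat" where
  "Codim H = CARD('n) - vec.dim H"

definition coset_density :: "(('p::prime_card, 'n::finite) Fpn \<Rightarrow> real) \<Rightarrow> ('p, 'n) Fpn set \<Rightarrow> ('p, 'n) Fpn \<Rightarrow> real" where
  "coset_density f H g = (\<Sum>x\<in>H. f (x + g)) / real (card H)"

definition mean_cube_density :: "(('p::prime_card, 'n::finite) Fpn \<Rightarrow> real) \<Rightarrow> ('p, 'n) Fpn set \<Rightarrow> real" where
  "mean_cube_density f H =
     (\<Sum>g\<in>(UNIV :: ('p, 'n) Fpn set). (coset_density f H g) ^ 3) / real CARD(('p, 'n) Fpn)"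

definition ap_density :: "(('p::prime_card, 'n::finite) Fpn \<Rightarrow> real) \<Rightarrow> ('p, 'n) Fpn set \<Rightarrow> real" where
  "ap_density f H =
     (\<Sum>x\<in>(UNIV :: ('p, 'n) Fpn set).
        (\<Sum>d\<in>H - {0}. f x * f (x + d) * f (x + 2 *s d)) / real (card (H - {0})))
     / real CARD(('p, 'n) Fpn)"

text \<open>F_p^m for a natural number m, as functions nat => F_p vanishing from index m on.\<close>
definition Fpm :: "nat \<Rightarrow> (nat \<Rightarrow> 'p::prime_card mod_ring) set" where
  "Fpm m = {x. \<forall>i\<ge>m. x i = 0}"

definition three_AP_const :: "'p::prime_card itself \<Rightarrow> real \<Rightarrow> bool" where
  "three_AP_const _ C \<longleftrightarrow>
     (\<forall>m\<ge>1. \<forall>X \<subseteq> (Fpm m :: (nat \<Rightarrow> 'p mod_ring) set).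
        real (card {(a, d). a \<in> Fpm m \<and> d \<in> Fpm m \<and> a \<in> X \<and> (\<lambda>i. a i + d i) \<in> X \<and> (\<lambda>i. a i + 2 * d i) \<in> X})
          \<ge> (real (card X) / real CARD('p) ^ m) powr C * real CARD('p) ^ (2 * m))"

end

theory Submission
  imports Defs
begin

definition dotp :: "('p::prime_card,'n::finite) Fpn \<Rightarrow> ('p,'n) Fpn \<Rightarrow> 'p mod_ring" where
  "dotp r x = (\<Sum>i\<in>UNIV. r$i * x$i)"

lemma dotp_add_right: "dotp r (x+y) = dotp r x + dotp r y"
  by (simp add: dotp_def distrib_left sum.distrib)
lemma dotp_add_left: "dotp (r+s) x = dotp r x + dotp s x"
  by (simp add: dotp_def distrib_right sum.distrib)
lemma dotp_scale_right: "dotp r (c *s x) = c * dotp r x"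
  by (simp add: dotp_def sum_distrib_left mult.left_commute)
lemma dotp_scale_left: "dotp (c *s r) x = c * dotp r x"
  by (simp add: dotp_def sum_distrib_left mult.assoc)
lemma dotp_neg_right: "dotp r (-x) = - dotp r x"
  by (simp add: dotp_def sum_negf)
lemma dotp_neg_left: "dotp (-r) x = - dotp r x"
  by (simp add: dotp_def sum_negf)
lemma dotp_diff_right: "dotp r (x-y) = dotp r x - dotp r y"
  by (simp add: dotp_def sum_subtractf right_diff_distrib)
lemma dotp_comm: "dotp r x = dotp x r"
  by (simp add: dotp_def mult.commute)
lemma dotp_zero_right[simp]: "dotp r 0 = 0"
  by (simp add: dotp_def)
lemma dotp_axis: "dotp r (axis i c) = r$i * c"
proof -
  have "dotp r (axis i c) = (\<Sum>j\<in>UNIV. if j = i then r$i * c else 0)"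
    unfolding dotp_def by (intro sum.cong) (auto simp: axis_def)
  thus ?thesis by simp
qed

lemma CARD_p_gt1: "CARD('p::prime_card) > 1"
  using prime_card[where 'a='p] prime_gt_1_nat by blast

definition chi :: "'p::prime_card mod_ring \<Rightarrow> complex" where
  "chi a = cis (2*pi*real_of_int (to_int_mod_ring a) / real CARD('p))"

lemma chi_add: fixes a b :: "'p::prime_card mod_ring" shows "chi (a+b) = chi a * chi b"
proof -
  define A where "A = to_int_mod_ring a"
  define B where "B = to_int_mod_ring b"
  define p where "p = int CARD('p)"
  have pp: "p > 0" unfolding p_def using CARD_p_gt1[where 'p='p] by simp
  have e: "A + B = (A+B) mod p + p * ((A+B) div p)" by simp
  have "chi a * chi b = cis (2*pi*real_of_int (A+B) / real CARD('p))"
    unfolding chi_def A_def B_def cis_mult by (simp add: add_divide_distrib ring_distribs)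
  also have "real_of_int (A+B) = real_of_int ((A+B) mod p) + real_of_int p * real_of_int ((A+B) div p)"
    by (metis e of_int_add of_int_mult)
  also have "2*pi*(real_of_int ((A+B) mod p) + real_of_int p * real_of_int ((A+B) div p)) / real CARD('p)
      = 2*pi*real_of_int ((A+B) mod p) / real CARD('p) + 2 * pi * real_of_int ((A+B) div p)"
    using pp unfolding p_def by (simp add: field_simps)
  also have "cis \<dots> = cis (2*pi*real_of_int ((A+B) mod p) / real CARD('p))"
    by (simp add: cis_mult[symmetric])
  also have "\<dots> = chi (a+b)"
    unfolding chi_def to_int_mod_ring_add A_def B_def p_def by simp
  finally show ?thesis by simp
qed

lemma chi_zero[simp]: "chi 0 = 1"
  by (simp add: chi_def)

lemma norm_chi[simp]: "norm (chi a) = 1"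
  by (simp add: chi_def)

lemma chi_neg: "chi (-a) = cnj (chi a)"
proof -
  have "chi a * chi (-a) = 1" by (simp add: chi_add[symmetric])
  moreover have "chi a * cnj (chi a) = 1"
    using complex_norm_square[of "chi a"] by simp
  moreover have "chi a \<noteq> 0" by (metis norm_chi norm_zero zero_neq_one)
  ultimately show ?thesis by (metis mult_left_cancel)
qed

lemma chi_eq_1: fixes a :: "'p::prime_card mod_ring" assumes "chi a = 1" shows "a = 0"
proof -
  define A where "A = to_int_mod_ring a"
  have r: "A \<in> {0..<int CARD('p)}" unfolding A_def using range_to_int_mod_ring by blast
  have "cos (2*pi*real_of_int A / real CARD('p)) = 1"
    using assms unfolding chi_def A_def by (metis cis.simps(1) one_complex.simps(1))
  then obtain n :: int where n: "2*pi*real_of_int A / real CARD('p) = real_of_int n * 2 * pi"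
    using cos_one_2pi_int by metis
  have "real_of_int A = n * real CARD('p)" using n by (simp add: field_simps)
  hence "A = n * int CARD('p)" by (metis of_int_eq_iff of_int_mult of_int_of_nat_eq)
  moreover have p: "int CARD('p) > 0" using CARD_p_gt1[where 'p='p] by simp
  ultimately have "0 \<le> n * int CARD('p)" "n * int CARD('p) < 1 * int CARD('p)" using r by auto
  hence "0 \<le> n" "n < 1" using p by (simp_all add: zero_le_mult_iff mult_less_cancel_right)
  hence "A = 0" using \<open>A = n * int CARD('p)\<close> by simp
  thus ?thesis unfolding A_def by (metis of_int_mod_ring_to_int_mod_ring of_int_mod_ring_hom.hom_zero)
qed

definition ee :: "('p::prime_card,'n::finite) Fpn \<Rightarrow> ('p,'n) Fpn \<Rightarrow> complex" where
  "ee r x = chi (dotp r x)"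

lemma ee_add_right: "ee r (x+y) = ee r x * ee r y"
  by (simp add: ee_def dotp_add_right chi_add)
lemma ee_add_left: "ee (r+s) x = ee r x * ee s x"
  by (simp add: ee_def dotp_add_left chi_add)
lemma ee_neg_right: "ee r (-x) = cnj (ee r x)"
  by (simp add: ee_def dotp_neg_right chi_neg)
lemma ee_zero_right[simp]: "ee r 0 = 1"
  by (simp add: ee_def)
lemma norm_ee[simp]: "norm (ee r x) = 1"
  by (simp add: ee_def)
lemma ee_comm: "ee r x = ee x r"
  by (simp add: ee_def dotp_comm)

lemma sum_ee_subspace_zero:
  assumes K: "vec.subspace K" and y0: "y0 \<in> K" and nz: "dotp r y0 \<noteq> 0"
  shows "(\<Sum>y\<in>K. ee r y) = 0"
proof -
  have bij: "bij_betw (\<lambda>y. y + y0) K K"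
  proof (rule bij_betwI[where g="\<lambda>y. y - y0"])
    show "(\<lambda>y. y + y0) \<in> K \<rightarrow> K" using K y0 by (auto intro: vec.subspace_add)
    show "(\<lambda>y. y - y0) \<in> K \<rightarrow> K" using K y0 by (auto intro: vec.subspace_diff)
  qed auto
  have "(\<Sum>y\<in>K. ee r y) = (\<Sum>y\<in>K. ee r (y + y0))"
    using sum.reindex_bij_betw[OF bij, of "ee r"] by simp
  also have "\<dots> = ee r y0 * (\<Sum>y\<in>K. ee r y)"
    by (simp add: ee_add_right sum_distrib_left mult.commute)
  finally have "(1 - ee r y0) * (\<Sum>y\<in>K. ee r y) = 0" by (simp add: algebra_simps)
  moreover have "ee r y0 \<noteq> 1" using chi_eq_1 nz unfolding ee_def by blast
  ultimately show ?thesis by simp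
qed

lemma sum_ee_subspace:
  assumes K: "vec.subspace K"
  shows "(\<Sum>y\<in>K. ee r y) = (if (\<forall>y\<in>K. dotp r y = 0) then of_nat (card K) else 0)"
proof (cases "\<forall>y\<in>K. dotp r y = 0")
  case True
  hence "(\<Sum>y\<in>K. ee r y) = (\<Sum>y\<in>K. 1)" by (intro sum.cong) (auto simp: ee_def)
  thus ?thesis using True by simp
next
  case False
  then obtain y0 where "y0 \<in> K" "dotp r y0 \<noteq> 0" by blast
  hence "(\<Sum>y\<in>K. ee r y) = 0" by (intro sum_ee_subspace_zero[OF K])
  thus ?thesis by (simp only: if_not_P[OF False])
qed

lemma sum_ee_UNIV:
  "(\<Sum>r\<in>UNIV. ee r (z::('p::prime_card,'n::finite) Fpn)) = (if z = 0 then of_nat CARD(('p,'n) Fpn) else 0)"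
proof (cases "z = 0")
  case True thus ?thesis by (simp add: ee_def dotp_comm[of _ 0])
next
  case False
  then obtain i where i: "z$i \<noteq> 0" by (metis vec_eq_iff zero_index)
  have "(\<Sum>r\<in>UNIV. ee r z) = (\<Sum>r\<in>UNIV. ee z r)" by (simp add: ee_comm)
  also have "\<dots> = 0"
    by (rule sum_ee_subspace_zero[of UNIV "axis i 1" z]) (use i in \<open>auto simp: dotp_axis\<close>)
  finally show ?thesis using False by simp
qed

lemma sum_shift: "(\<Sum>d\<in>UNIV. g (x + d)) = (\<Sum>b\<in>UNIV. g (b::'a::{ab_group_add,finite}))"
  by (rule sum.reindex_bij_witness[of _ "\<lambda>b. b - x" "\<lambda>d. x + d"]) auto

lemma sum_rot3: "(\<Sum>b\<in>B. \<Sum>c\<in>C. \<Sum>a\<in>A. F a b c) = (\<Sum>a\<in>A. \<Sum>b\<in>B. \<Sum>c\<in>C. F a b c)"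
proof -
  have "(\<Sum>b\<in>B. \<Sum>c\<in>C. \<Sum>a\<in>A. F a b c) = (\<Sum>b\<in>B. \<Sum>a\<in>A. \<Sum>c\<in>C. F a b c)"
    by (intro sum.cong refl sum.swap)
  also have "\<dots> = (\<Sum>a\<in>A. \<Sum>b\<in>B. \<Sum>c\<in>C. F a b c)" by (rule sum.swap)
  finally show ?thesis .
qed

definition fou :: "(('p::prime_card,'n::finite) Fpn \<Rightarrow> real) \<Rightarrow> ('p,'n) Fpn \<Rightarrow> complex" where
  "fou u r = (\<Sum>x\<in>UNIV. complex_of_real (u x) * ee r (-x)) / of_nat CARD(('p,'n) Fpn)"

lemma CARD_V_pos: "CARD(('p::prime_card,'n::finite) Fpn) > 0"
  by simp

lemma parseval:
  fixes u :: "('p::prime_card,'n::finite) Fpn \<Rightarrow> real"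
  shows "(\<Sum>r\<in>UNIV. (cmod (fou u r))^2) = (\<Sum>x\<in>UNIV. (u x)^2) / real CARD(('p,'n) Fpn)"
proof -
  define N where "N = CARD(('p,'n) Fpn)"
  have N0: "N > 0" unfolding N_def by simp
  have 1: "fou u r * cnj (fou u r) =
      (\<Sum>x\<in>UNIV. \<Sum>y\<in>UNIV. complex_of_real (u x * u y) * ee r (x - y)) / (of_nat N)^2" for r
  proof -
    have "cnj (fou u r) = (\<Sum>y\<in>UNIV. complex_of_real (u y) * ee r y) / of_nat N"
      unfolding fou_def N_def by (simp add: ee_neg_right)
    hence "fou u r * cnj (fou u r) = (\<Sum>x\<in>UNIV. complex_of_real (u x) * ee r (-x)) *
        (\<Sum>y\<in>UNIV. complex_of_real (u y) * ee r y) / (of_nat N)^2"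
      unfolding fou_def N_def by (simp add: power2_eq_square)
    also have "(\<Sum>x\<in>UNIV. complex_of_real (u x) * ee r (-x)) * (\<Sum>y\<in>UNIV. complex_of_real (u y) * ee r y)
       = (\<Sum>x\<in>UNIV. \<Sum>y\<in>UNIV. complex_of_real (u x * u y) * ee r (x - y))"
      by (simp add: sum_product ee_add_right[symmetric] mult_ac)
    finally show ?thesis .
  qed
  have "complex_of_real (\<Sum>r\<in>UNIV. (cmod (fou u r))^2) = (\<Sum>r\<in>UNIV. fou u r * cnj (fou u r))"
    by (simp only: of_real_sum complex_norm_square)
  also have "\<dots> = (\<Sum>r\<in>UNIV. \<Sum>x\<in>UNIV. \<Sum>y\<in>UNIV. complex_of_real (u x * u y) * ee r (x - y)) / (of_nat N)^2"
    by (simp add: 1 sum_divide_distrib)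
  also have "(\<Sum>r\<in>UNIV. \<Sum>x\<in>UNIV. \<Sum>y\<in>UNIV. complex_of_real (u x * u y) * ee r (x - y))
      = (\<Sum>x\<in>UNIV. \<Sum>y\<in>UNIV. complex_of_real (u x * u y) * (\<Sum>r\<in>UNIV. ee r (x - y)))"
  proof -
    have "(\<Sum>r\<in>UNIV. \<Sum>x\<in>UNIV. \<Sum>y\<in>UNIV. complex_of_real (u x * u y) * ee r (x - y))
       = (\<Sum>x\<in>UNIV. \<Sum>r\<in>UNIV. \<Sum>y\<in>UNIV. complex_of_real (u x * u y) * ee r (x - y))"
      by (rule sum.swap)
    also have "\<dots> = (\<Sum>x\<in>UNIV. \<Sum>y\<in>UNIV. \<Sum>r\<in>UNIV. complex_of_real (u x * u y) * ee r (x - y))"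
      by (intro sum.cong refl sum.swap)
    finally show ?thesis by (simp only: sum_distrib_left)
  qed
  also have "\<dots> = (\<Sum>x\<in>UNIV. complex_of_real ((u x)^2) * of_nat N)"
    by (simp add: sum_ee_UNIV N_def power2_eq_square if_distrib cong: if_cong)
  also have "(\<Sum>x\<in>UNIV. complex_of_real ((u x)^2) * of_nat N) / (of_nat N)^2
     = complex_of_real (\<Sum>x\<in>UNIV. (u x)^2) * of_nat N / (of_nat N)^2"
    by (simp only: sum_distrib_right[symmetric] of_real_sum)
  also have "\<dots> = complex_of_real ((\<Sum>x\<in>UNIV. (u x)^2) / real N)"
    using N0 by (simp add: power2_eq_square)
  finally have "complex_of_real (\<Sum>r\<in>UNIV. (cmod (fou u r))^2) =
      complex_of_real ((\<Sum>x\<in>UNIV. (u x)^2) / real N)" .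
  thus ?thesis unfolding N_def by (simp only: of_real_eq_iff)
qed

lemma two_scale_sub2: "x + (2::'a::field) *s d = 2 *s (x + d) - (x :: 'a^'n)"
  by (simp add: vec_eq_iff algebra_simps)

lemma ee_m2: "ee (-((2::'p::prime_card mod_ring) *s r)) (-b) = ee r (2 *s b)"
  by (simp add: ee_def dotp_neg_left dotp_neg_right dotp_scale_left dotp_scale_right)

lemma ap_fourier:
  fixes u1 u2 u3 :: "('p::prime_card,'n::finite) Fpn \<Rightarrow> real"
  shows "complex_of_real (\<Sum>x\<in>UNIV. \<Sum>d\<in>UNIV. u1 x * u2 (x+d) * u3 (x + 2 *s d)) =
    (of_nat CARD(('p,'n) Fpn))^2 * (\<Sum>r\<in>UNIV. fou u1 r * fou u2 (-(2 *s r)) * fou u3 r)"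
proof -
  define N where "N = CARD(('p,'n) Fpn)"
  have N0: "N > 0" unfolding N_def by simp
  have L: "(\<Sum>x\<in>UNIV. \<Sum>d\<in>UNIV. u1 x * u2 (x+d) * u3 (x + 2 *s d)) =
        (\<Sum>a\<in>UNIV. \<Sum>b\<in>UNIV. u1 a * u2 b * u3 (2 *s b - a))"
  proof (rule sum.cong[OF refl])
    fix x :: "('p,'n) Fpn"
    have "(\<Sum>d\<in>UNIV. u1 x * u2 (x+d) * u3 (x + 2 *s d)) =
          (\<Sum>d\<in>UNIV. (\<lambda>b. u1 x * u2 b * u3 (2 *s b - x)) (x + d))"
      by (intro sum.cong refl) (simp only: two_scale_sub2[of x])
    also have "\<dots> = (\<Sum>b\<in>UNIV. u1 x * u2 b * u3 (2 *s b - x))" by (rule sum_shift)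
    finally show "(\<Sum>d\<in>UNIV. u1 x * u2 (x+d) * u3 (x + 2 *s d)) =
          (\<Sum>b\<in>UNIV. u1 x * u2 b * u3 (2 *s b - x))" .
  qed
  have P: "fou u1 r * fou u2 (-(2 *s r)) * fou u3 r =
    (\<Sum>a\<in>UNIV. \<Sum>b\<in>UNIV. \<Sum>c\<in>UNIV. complex_of_real (u1 a * u2 b * u3 c) * ee r (2 *s b - a - c)) / (of_nat N)^3" for r
  proof -
    have "fou u1 r * fou u2 (-(2 *s r)) * fou u3 r =
       (\<Sum>a\<in>UNIV. complex_of_real (u1 a) * ee r (-a)) * (\<Sum>b\<in>UNIV. complex_of_real (u2 b) * ee r (2 *s b))
       * (\<Sum>c\<in>UNIV. complex_of_real (u3 c) * ee r (-c)) / (of_nat N)^3"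
      unfolding fou_def N_def by (simp add: ee_m2 power3_eq_cube)
    also have "(\<Sum>a\<in>UNIV. complex_of_real (u1 a) * ee r (-a)) * (\<Sum>b\<in>UNIV. complex_of_real (u2 b) * ee r (2 *s b))
       * (\<Sum>c\<in>UNIV. complex_of_real (u3 c) * ee r (-c)) =
       (\<Sum>a\<in>UNIV. \<Sum>b\<in>UNIV. \<Sum>c\<in>UNIV. complex_of_real (u1 a * u2 b * u3 c) * ee r (2 *s b - a - c))"
    proof -
      have e: "ee r (2 *s b - a - c) = ee r (-a) * ee r (2 *s b) * ee r (-c)" for a b c :: "('p,'n) Fpn"
      proof -
        have "2 *s b - a - c = (-a) + 2 *s b + (-c)" by (simp add: algebra_simps)
        thus ?thesis by (simp only: ee_add_right)
      qed
      show ?thesis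
        apply (simp only: sum_distrib_right sum_distrib_left e of_real_mult mult_ac)
        apply (rule sum.swap)
        done
    qed
    finally show ?thesis .
  qed
  have "(\<Sum>r\<in>UNIV. fou u1 r * fou u2 (-(2 *s r)) * fou u3 r) =
     (\<Sum>r\<in>UNIV. \<Sum>a\<in>UNIV. \<Sum>b\<in>UNIV. \<Sum>c\<in>UNIV. complex_of_real (u1 a * u2 b * u3 c) * ee r (2 *s b - a - c)) / (of_nat N)^3"
    by (simp add: P sum_divide_distrib)
  also have "(\<Sum>r\<in>UNIV. \<Sum>a\<in>UNIV. \<Sum>b\<in>UNIV. \<Sum>c\<in>UNIV. complex_of_real (u1 a * u2 b * u3 c) * ee r (2 *s b - a - c))
     = (\<Sum>a\<in>UNIV. \<Sum>b\<in>UNIV. \<Sum>c\<in>UNIV. complex_of_real (u1 a * u2 b * u3 c) * (\<Sum>r\<in>UNIV. ee r (2 *s b - a - c)))"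
  proof -
    let ?F = "\<lambda>r a b c. complex_of_real (u1 a * u2 b * u3 c) * ee r (2 *s b - a - c)"
    have "(\<Sum>r\<in>UNIV. \<Sum>a\<in>UNIV. \<Sum>b\<in>UNIV. \<Sum>c\<in>UNIV. ?F r a b c)
       = (\<Sum>a\<in>UNIV. \<Sum>r\<in>UNIV. \<Sum>b\<in>UNIV. \<Sum>c\<in>UNIV. ?F r a b c)"
      by (rule sum.swap)
    also have "\<dots> = (\<Sum>a\<in>UNIV. \<Sum>b\<in>UNIV. \<Sum>r\<in>UNIV. \<Sum>c\<in>UNIV. ?F r a b c)"
      by (intro sum.cong refl sum.swap)
    also have "\<dots> = (\<Sum>a\<in>UNIV. \<Sum>b\<in>UNIV. \<Sum>c\<in>UNIV. \<Sum>r\<in>UNIV. ?F r a b c)"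
      by (intro sum.cong refl sum.swap)
    finally show ?thesis by (simp only: sum_distrib_left)
  qed
  also have "\<dots> = (\<Sum>a\<in>UNIV. \<Sum>b\<in>UNIV. complex_of_real (u1 a * u2 b * u3 (2 *s b - a)) * of_nat N)"
  proof (intro sum.cong refl)
    fix a b :: "('p,'n) Fpn"
    have "(\<Sum>c\<in>UNIV. complex_of_real (u1 a * u2 b * u3 c) * (\<Sum>r\<in>UNIV. ee r (2 *s b - a - c)))
        = (\<Sum>c\<in>UNIV. if c = 2 *s b - a then complex_of_real (u1 a * u2 b * u3 c) * of_nat N else 0)"
      by (intro sum.cong refl) (auto simp: sum_ee_UNIV N_def)
    also have "\<dots> = complex_of_real (u1 a * u2 b * u3 (2 *s b - a)) * of_nat N"
      by (simp add: sum.delta')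
    finally show "(\<Sum>c\<in>UNIV. complex_of_real (u1 a * u2 b * u3 c) * (\<Sum>r\<in>UNIV. ee r (2 *s b - a - c)))
        = complex_of_real (u1 a * u2 b * u3 (2 *s b - a)) * of_nat N" .
  qed
  also have "(\<Sum>a\<in>UNIV. \<Sum>b\<in>UNIV. complex_of_real (u1 a * u2 b * u3 (2 *s b - a)) * of_nat N) / (of_nat N)^3
     = (\<Sum>a\<in>UNIV. \<Sum>b\<in>UNIV. complex_of_real (u1 a * u2 b * u3 (2 *s b - a))) * of_nat N / (of_nat N)^3"
    by (simp only: sum_distrib_right[symmetric])
  also have "\<dots> = (\<Sum>a\<in>UNIV. \<Sum>b\<in>UNIV. complex_of_real (u1 a * u2 b * u3 (2 *s b - a))) / (of_nat N)^2"
    using N0 by (simp add: power2_eq_square power3_eq_cube)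
  finally have "(of_nat N)^2 * (\<Sum>r\<in>UNIV. fou u1 r * fou u2 (-(2 *s r)) * fou u3 r) =
      (\<Sum>a\<in>UNIV. \<Sum>b\<in>UNIV. complex_of_real (u1 a * u2 b * u3 (2 *s b - a)))"
    using N0 by simp
  thus ?thesis using L unfolding N_def by simp
qed

lemma two_neq_zero_mod_ring:
  assumes "CARD('p::prime_card) \<noteq> 2"
  shows "(2::'p mod_ring) \<noteq> 0"
proof
  assume "(2::'p mod_ring) = 0"
  hence "(of_nat 2 :: 'p mod_ring) = 0" by simp
  hence "CARD('p) dvd 2" by (rule of_nat_0_mod_ring_dvd)
  moreover have "CARD('p) > 1" by (rule CARD_p_gt1)
  ultimately have "CARD('p) = 2" using dvd_imp_le[of "CARD('p)" 2] by (auto simp: le_Suc_eq)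
  with assms show False by simp
qed

lemma bij_sigma:
  assumes "CARD('p::prime_card) \<noteq> 2"
  shows "bij (\<lambda>r::('p,'n::finite) Fpn. -((2::'p mod_ring) *s r))"
proof -
  have two: "(2::'p mod_ring) \<noteq> 0" using two_neq_zero_mod_ring[OF assms] .
  have "inj (\<lambda>r::('p,'n) Fpn. -((2::'p mod_ring) *s r))"
  proof (rule injI)
    fix x y :: "('p,'n) Fpn"
    assume "-((2::'p mod_ring) *s x) = -((2::'p mod_ring) *s y)"
    thus "x = y" using two by auto
  qed
  thus ?thesis using finite_UNIV_inj_surj[of "\<lambda>r::('p,'n) Fpn. -((2::'p mod_ring) *s r)"] by (simp add: bij_def)
qed

lemma sum_sigma:
  assumes "CARD('p::prime_card) \<noteq> 2"
  shows "(\<Sum>r\<in>UNIV. g (-((2::'p mod_ring) *s r))) = (\<Sum>r\<in>UNIV. g (r::('p,'n::finite) Fpn))"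
  using sum.reindex_bij_betw[OF bij_sigma[OF assms, unfolded bij_betw_def[symmetric]], of g]
  by (simp add: bij_betw_def)

lemma tri_bound:
  fixes a A :: "('p::prime_card,'n::finite) Fpn \<Rightarrow> complex"
  assumes p2: "CARD('p) \<noteq> 2"
    and A: "\<And>r. A r = (if ind r then a r else 0)"
    and small: "\<And>r. \<not> ind r \<Longrightarrow> cmod (a r) \<le> \<epsilon>"
    and eps: "\<epsilon> \<ge> 0"
  shows "cmod ((\<Sum>r\<in>UNIV. a r * a (-(2 *s r)) * a r) - (\<Sum>r\<in>UNIV. A r * A (-(2 *s r)) * A r))
     \<le> 3 * \<epsilon> * (\<Sum>r\<in>UNIV. (cmod (a r))^2)"
proof -
  define \<sigma> where "\<sigma> = (\<lambda>r::('p,'n) Fpn. -((2::'p mod_ring) *s r))"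
  define m where "m = (\<lambda>r. cmod (a r))"
  have m0: "m r \<ge> 0" for r unfolding m_def by simp
  have pt: "cmod (a r * a (\<sigma> r) * a r - A r * A (\<sigma> r) * A r) \<le> \<epsilon> * (2 * (m r * m (\<sigma> r)) + (m r)^2)" for r
  proof -
    have e1: "\<epsilon> * (m r * m (\<sigma> r)) \<le> \<epsilon> * (2 * (m r * m (\<sigma> r)) + (m r)^2)"
      using m0[of r] m0[of "\<sigma> r"] eps by (intro mult_left_mono) auto
    have e2: "\<epsilon> * (m r)^2 \<le> \<epsilon> * (2 * (m r * m (\<sigma> r)) + (m r)^2)"
      using m0[of r] m0[of "\<sigma> r"] eps by (intro mult_left_mono) auto
    have nrm: "cmod (a r * a (\<sigma> r) * a r) = m r * m (\<sigma> r) * m r"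
      unfolding m_def by (simp add: norm_mult)
    show ?thesis
    proof (cases "ind r")
      case True
      show ?thesis
      proof (cases "ind (\<sigma> r)")
        case True
        thus ?thesis using \<open>ind r\<close> A[of r] A[of "\<sigma> r"] m0[of r] m0[of "\<sigma> r"] eps by simp
      next
        case False
        hence "m (\<sigma> r) \<le> \<epsilon>" using small unfolding m_def by blast
        hence "m r * m (\<sigma> r) * m r \<le> m r * \<epsilon> * m r"
          using m0[of r] by (intro mult_right_mono mult_left_mono) auto
        thus ?thesis using e2 nrm False \<open>ind r\<close> A[of r] A[of "\<sigma> r"]
          by (simp add: power2_eq_square mult_ac)
      qed
    next
      case False
      hence "m r \<le> \<epsilon>" using small unfolding m_def by blast
      hence "m r * m (\<sigma> r) * m r \<le> \<epsilon> * m (\<sigma> r) * m r"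
        using m0[of r] m0[of "\<sigma> r"] by (intro mult_right_mono) auto
      thus ?thesis using e1 nrm False A[of r]
        by (simp add: mult_ac)
    qed
  qed
  have "cmod ((\<Sum>r\<in>UNIV. a r * a (\<sigma> r) * a r) - (\<Sum>r\<in>UNIV. A r * A (\<sigma> r) * A r))
      = cmod (\<Sum>r\<in>UNIV. a r * a (\<sigma> r) * a r - A r * A (\<sigma> r) * A r)"
    by (simp add: sum_subtractf)
  also have "\<dots> \<le> (\<Sum>r\<in>UNIV. cmod (a r * a (\<sigma> r) * a r - A r * A (\<sigma> r) * A r))"
    by (rule norm_sum)
  also have "\<dots> \<le> (\<Sum>r\<in>UNIV. \<epsilon> * (2 * (m r * m (\<sigma> r)) + (m r)^2))"
    by (intro sum_mono pt)
  also have "\<dots> \<le> (\<Sum>r\<in>UNIV. \<epsilon> * ((m r)^2 + (m (\<sigma> r))^2 + (m r)^2))"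
  proof (intro sum_mono mult_left_mono eps)
    fix r
    have "0 \<le> (m r - m (\<sigma> r))^2" by simp
    thus "2 * (m r * m (\<sigma> r)) + (m r)^2 \<le> (m r)^2 + (m (\<sigma> r))^2 + (m r)^2"
      by (simp add: power2_eq_square algebra_simps)
  qed
  also have "\<dots> = \<epsilon> * (2 * (\<Sum>r\<in>UNIV. (m r)^2) + (\<Sum>r\<in>UNIV. (m (\<sigma> r))^2))"
    by (simp add: sum_distrib_left[symmetric] sum.distrib)
  also have "(\<Sum>r\<in>UNIV. (m (\<sigma> r))^2) = (\<Sum>r\<in>UNIV. (m r)^2)"
    unfolding \<sigma>_def by (rule sum_sigma[OF p2])
  finally show ?thesis unfolding \<sigma>_def m_def by (simp add: algebra_simps)
qed

definition restr :: "(('p::prime_card,'n::finite) Fpn \<Rightarrow> real) \<Rightarrow> ('p,'n) Fpn \<Rightarrow> ('p,'n) Fpn set \<Rightarrow> ('p,'n) Fpn \<Rightarrow> real" where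
  "restr u g K = (\<lambda>x. if x - g \<in> K then u x else 0)"

lemma card_coset:
  "card {x. x - g \<in> K} = card (K :: ('p::prime_card,'n::finite) Fpn set)"
proof -
  have "bij_betw (\<lambda>x. x - g) {x. x - g \<in> K} K"
    by (rule bij_betwI[where g="\<lambda>y. y + g"]) auto
  thus ?thesis by (rule bij_betw_same_card)
qed

lemma subspace_card_pos:
  assumes "vec.subspace (K :: ('p::prime_card,'n::finite) Fpn set)"
  shows "card K > 0"
  using vec.subspace_0[OF assms] by (auto simp: card_gt_0_iff)

lemma dotp_diff_left: "dotp (r - s) x = dotp r x - dotp s x"
  by (simp add: dotp_def sum_subtractf left_diff_distrib)

lemma coset_density_restr:
  fixes f :: "('p::prime_card,'n::finite) Fpn \<Rightarrow> real"
  assumes H: "vec.subspace H" and H': "vec.subspace H'" and sub: "H' \<subseteq> H"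
  shows "restr (coset_density f H') g H x = (\<Sum>y\<in>H'. restr f g H (y + x)) / real (card H')"
proof (cases "x - g \<in> H")
  case True
  have "y + x - g \<in> H" if "y \<in> H'" for y
    using vec.subspace_add[OF H, of y "x - g"] that sub True by (auto simp: add_diff_eq)
  thus ?thesis using True unfolding restr_def coset_density_def by (auto intro!: sum.cong arg_cong2[where f="(/)"])
next
  case False
  have "y + x - g \<notin> H" if "y \<in> H'" for y
  proof
    assume "y + x - g \<in> H"
    hence "(y + x - g) - y \<in> H" using vec.subspace_diff[OF H] that sub by blast
    thus False using False by (simp add: algebra_simps)
  qed
  thus ?thesis using False unfolding restr_def by simp
qed

lemma fou_proj:
  fixes f :: "('p::prime_card,'n::finite) Fpn \<Rightarrow> real"
  assumes H: "vec.subspace H" and H': "vec.subspace H'" and sub: "H' \<subseteq> H"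
  shows "fou (restr (coset_density f H') g H) r =
     (if (\<forall>y\<in>H'. dotp r y = 0) then fou (restr f g H) r else 0)"
proof -
  define N where "N = CARD(('p,'n) Fpn)"
  define M' where "M' = card H'"
  have M'0: "M' > 0" unfolding M'_def by (rule subspace_card_pos[OF H'])
  define u where "u = restr f g H"
  have "fou (restr (coset_density f H') g H) r =
     (\<Sum>x\<in>UNIV. \<Sum>y\<in>H'. complex_of_real (u (y + x)) * ee r (-x)) / (of_nat M' * of_nat N)"
    unfolding fou_def coset_density_restr[OF H H' sub] u_def M'_def N_def
    by (simp add: sum_distrib_right sum_divide_distrib[symmetric] divide_simps)
  also have "(\<Sum>x\<in>UNIV. \<Sum>y\<in>H'. complex_of_real (u (y + x)) * ee r (-x)) =
       (\<Sum>y\<in>H'. \<Sum>x\<in>UNIV. complex_of_real (u (y + x)) * ee r (-x))"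
    by (rule sum.swap)
  also have "\<dots> = (\<Sum>y\<in>H'. ee r y * (\<Sum>b\<in>UNIV. complex_of_real (u b) * ee r (-b)))"
  proof (intro sum.cong refl)
    fix y
    have "(\<Sum>x\<in>UNIV. complex_of_real (u (y + x)) * ee r (-x)) =
       (\<Sum>x\<in>UNIV. (\<lambda>b. complex_of_real (u b) * ee r (-b) * ee r y) (y + x))"
    proof (intro sum.cong refl)
      fix x
      have "-x = -(y + x) + y" by (simp add: algebra_simps)
      hence "ee r (-x) = ee r (-(y+x)) * ee r y" by (simp only: ee_add_right)
      thus "complex_of_real (u (y + x)) * ee r (-x) = (\<lambda>b. complex_of_real (u b) * ee r (-b) * ee r y) (y + x)"
        by simp
    qed
    also have "\<dots> = (\<Sum>b\<in>UNIV. complex_of_real (u b) * ee r (-b) * ee r y)" by (rule sum_shift)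
    finally show "(\<Sum>x\<in>UNIV. complex_of_real (u (y + x)) * ee r (-x)) =
       ee r y * (\<Sum>b\<in>UNIV. complex_of_real (u b) * ee r (-b))"
      by (simp add: sum_distrib_left mult_ac)
  qed
  also have "\<dots> = (\<Sum>y\<in>H'. ee r y) * (\<Sum>b\<in>UNIV. complex_of_real (u b) * ee r (-b))"
    by (simp add: sum_distrib_right)
  also have "(\<Sum>y\<in>H'. ee r y) = (if (\<forall>y\<in>H'. dotp r y = 0) then of_nat M' else 0)"
    unfolding M'_def by (rule sum_ee_subspace[OF H'])
  finally show ?thesis using M'0 unfolding fou_def u_def N_def by auto
qed

lemma fou_class:
  assumes H: "vec.subspace H" and eq: "\<forall>y\<in>H. dotp r y = dotp r' y"
  shows "cmod (fou (restr f g H) r') = cmod (fou (restr f g H) r)"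
proof -
  have pt: "complex_of_real (restr f g H x) * ee r' (-x) = complex_of_real (restr f g H x) * ee r (-x) * ee (r' - r) (-g)" for x
  proof (cases "x - g \<in> H")
    case True
    have "dotp (r' - r) (-x) = dotp (r' - r) (-g) - dotp (r' - r) (x - g)"
      by (simp add: dotp_diff_right[symmetric] dotp_neg_right[symmetric] algebra_simps)
    also have "dotp (r' - r) (x - g) = 0"
    proof -
      have "dotp r (x-g) = dotp r' (x-g)" using eq True by blast
      thus ?thesis by (simp add: dotp_diff_left)
    qed
    finally have "ee (r' - r) (-x) = ee (r' - r) (-g)" by (simp add: ee_def)
    moreover have "ee r' (-x) = ee r (-x) * ee (r' - r) (-x)"
      by (simp add: ee_add_left[symmetric])
    ultimately show ?thesis by simp
  next
    case False
    thus ?thesis by (simp add: restr_def)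
  qed
  have "fou (restr f g H) r' = fou (restr f g H) r * ee (r' - r) (-g)"
    unfolding fou_def by (simp add: pt sum_distrib_right)
  thus ?thesis by (simp add: norm_mult)
qed

lemma parseval_restr:
  fixes f :: "('p::prime_card,'n::finite) Fpn \<Rightarrow> real"
  assumes f: "\<And>x. 0 \<le> f x \<and> f x \<le> 1"
  shows "(\<Sum>r\<in>UNIV. (cmod (fou (restr f g H) r))^2) \<le> real (card H) / real CARD(('p,'n) Fpn)"
proof -
  have "(\<Sum>x\<in>UNIV. (restr f g H x)^2) \<le> (\<Sum>x\<in>UNIV. if x - g \<in> H then 1 else 0)"
  proof (intro sum_mono)
    fix x
    show "(restr f g H x)^2 \<le> (if x - g \<in> H then 1 else 0)"
      using f[of x] by (auto simp: restr_def power_le_one)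
  qed
  also have "\<dots> = real (card {x. x - g \<in> H})"
    by (simp add: sum.If_cases Collect_conv_if)
  also have "\<dots> = real (card H)" by (simp add: card_coset)
  finally show ?thesis by (simp add: parseval divide_right_mono)
qed

definition Tsum :: "(('p::prime_card,'n::finite) Fpn \<Rightarrow> real) \<Rightarrow> real" where
  "Tsum u = (\<Sum>x\<in>UNIV. \<Sum>d\<in>UNIV. u x * u (x+d) * u (x + 2 *s d))"

lemma sum_coset:
  "(\<Sum>x\<in>UNIV. if x - g \<in> H then \<phi> x else 0) = (\<Sum>y\<in>H. \<phi> (y + (g::('p::prime_card,'n::finite) Fpn)))"
proof -
  have "(\<Sum>x\<in>UNIV. if x - g \<in> H then \<phi> x else 0) = (\<Sum>x\<in>{x. x - g \<in> H}. \<phi> x)"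
    by (simp add: sum.If_cases Collect_conv_if)
  also have "\<dots> = (\<Sum>y\<in>H. \<phi> (y + g))"
    by (rule sum.reindex_bij_witness[of _ "\<lambda>y. y + g" "\<lambda>x. x - g"]) auto
  finally show ?thesis .
qed

lemma Tsum_restr:
  assumes H: "vec.subspace H"
  shows "Tsum (restr u g H) = (\<Sum>y\<in>H. \<Sum>d\<in>H. u (y+g) * u (y+g+d) * u (y+g + 2 *s d))"
proof -
  have "Tsum (restr u g H) = (\<Sum>x\<in>UNIV. if x - g \<in> H then (\<Sum>d\<in>H. u x * u (x+d) * u (x + 2 *s d)) else 0)"
    unfolding Tsum_def
  proof (intro sum.cong refl)
    fix x
    show "(\<Sum>d\<in>UNIV. restr u g H x * restr u g H (x+d) * restr u g H (x + 2 *s d)) =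
      (if x - g \<in> H then (\<Sum>d\<in>H. u x * u (x+d) * u (x + 2 *s d)) else 0)"
    proof (cases "x - g \<in> H")
      case True
      have "(\<Sum>d\<in>UNIV. restr u g H x * restr u g H (x+d) * restr u g H (x + 2 *s d)) =
          (\<Sum>d\<in>UNIV. if d \<in> H then u x * u (x+d) * u (x + 2 *s d) else 0)"
      proof (intro sum.cong refl)
        fix d
        show "restr u g H x * restr u g H (x+d) * restr u g H (x + 2 *s d) =
          (if d \<in> H then u x * u (x+d) * u (x + 2 *s d) else 0)"
        proof (cases "d \<in> H")
          case True
          have "x + d - g \<in> H" using vec.subspace_add[OF H \<open>x - g \<in> H\<close> True] by (simp add: algebra_simps)
          moreover have "x + 2 *s d - g \<in> H"
            using vec.subspace_add[OF H \<open>x - g \<in> H\<close> vec.subspace_scale[OF H True, of 2]] by (simp add: algebra_simps)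
          ultimately show ?thesis using True \<open>x - g \<in> H\<close> by (simp add: restr_def)
        next
          case False
          have "x + d - g \<notin> H"
          proof
            assume "x + d - g \<in> H"
            hence "(x + d - g) - (x - g) \<in> H" using vec.subspace_diff[OF H _ \<open>x - g \<in> H\<close>] by blast
            thus False using False by simp
          qed
          thus ?thesis using False by (simp add: restr_def)
        qed
      qed
      also have "\<dots> = (\<Sum>d\<in>H. u x * u (x+d) * u (x + 2 *s d))"
        by (simp add: sum.inter_restrict[symmetric])
      finally show ?thesis using True by simp
    next
      case False
      thus ?thesis by (simp add: restr_def)
    qed
  qed
  also have "\<dots> = (\<Sum>y\<in>H. \<Sum>d\<in>H. u (y+g) * u (y+g+d) * u (y+g + 2 *s d))"
    by (rule sum_coset)
  finally show ?thesis .
qed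

lemma coset_err:
  fixes f :: "('p::prime_card,'n::finite) Fpn \<Rightarrow> real"
  assumes p2: "CARD('p) \<noteq> 2"
    and f: "\<And>x. 0 \<le> f x \<and> f x \<le> 1"
    and H: "vec.subspace H" and H': "vec.subspace H'" and sub: "H' \<subseteq> H"
    and eps: "\<epsilon> \<ge> 0"
    and small: "\<And>r. \<not> (\<forall>y\<in>H'. dotp r y = 0) \<Longrightarrow> cmod (fou (restr f g H) r) \<le> \<epsilon>"
  shows "\<bar>Tsum (restr f g H) - Tsum (restr (coset_density f H') g H)\<bar>
     \<le> 3 * \<epsilon> * real CARD(('p,'n) Fpn) * real (card H)"
proof -
  define N where "N = CARD(('p,'n) Fpn)"
  have N0: "N > 0" unfolding N_def by simp
  define a where "a = fou (restr f g H)"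
  define A where "A = fou (restr (coset_density f H') g H)"
  have A: "A r = (if (\<forall>y\<in>H'. dotp r y = 0) then a r else 0)" for r
    unfolding A_def a_def by (rule fou_proj[OF H H' sub])
  have tb: "cmod ((\<Sum>r\<in>UNIV. a r * a (-(2 *s r)) * a r) - (\<Sum>r\<in>UNIV. A r * A (-(2 *s r)) * A r))
     \<le> 3 * \<epsilon> * (\<Sum>r\<in>UNIV. (cmod (a r))^2)"
    by (rule tri_bound[OF p2 A _ eps]) (use small in \<open>auto simp: a_def\<close>)
  have ps: "(\<Sum>r\<in>UNIV. (cmod (a r))^2) \<le> real (card H) / real N"
    unfolding a_def N_def by (rule parseval_restr[OF f])
  have "complex_of_real (Tsum (restr f g H) - Tsum (restr (coset_density f H') g H)) =
     (of_nat N)^2 * ((\<Sum>r\<in>UNIV. a r * a (-(2 *s r)) * a r) - (\<Sum>r\<in>UNIV. A r * A (-(2 *s r)) * A r))"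
    unfolding Tsum_def of_real_diff ap_fourier a_def A_def N_def by (simp add: right_diff_distrib)
  hence "\<bar>Tsum (restr f g H) - Tsum (restr (coset_density f H') g H)\<bar> =
      (real N)^2 * cmod ((\<Sum>r\<in>UNIV. a r * a (-(2 *s r)) * a r) - (\<Sum>r\<in>UNIV. A r * A (-(2 *s r)) * A r))"
    by (drule_tac f=cmod in arg_cong) (simp only: norm_of_real norm_mult norm_power norm_of_nat)
  also have "\<dots> \<le> (real N)^2 * (3 * \<epsilon> * (real (card H) / real N))"
    using tb ps eps by (intro mult_left_mono order.trans[OF tb] mult_left_mono) auto
  also have "\<dots> = 3 * \<epsilon> * real N * real (card H)"
    using N0 by (simp add: power2_eq_square field_simps)
  finally show ?thesis unfolding N_def .
qed

lemma dotp_sum_right: "dotp r (sum f A) = (\<Sum>a\<in>A. dotp r (f a))"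
  by (induct A rule: infinite_finite_induct) (simp_all add: dotp_add_right)

lemma card_Fpm: "card (Fpm m :: (nat \<Rightarrow> 'p::prime_card mod_ring) set) = CARD('p) ^ m"
proof -
  have "bij_betw (\<lambda>x. restrict x {..<m}) (Fpm m :: (nat \<Rightarrow> 'p mod_ring) set) (PiE {..<m} (\<lambda>_. UNIV))"
  proof (rule bij_betwI[where g="\<lambda>e i. if i < m then e i else 0"])
    show "(\<lambda>x. restrict x {..<m}) \<in> (Fpm m :: (nat \<Rightarrow> 'p mod_ring) set) \<rightarrow> PiE {..<m} (\<lambda>_. UNIV)"
      by auto
    show "(\<lambda>e i. if i < m then e i else 0) \<in> PiE {..<m} (\<lambda>_. UNIV) \<rightarrow> (Fpm m :: (nat \<Rightarrow> 'p mod_ring) set)"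
      by (auto simp: Fpm_def)
    fix x :: "nat \<Rightarrow> 'p mod_ring" assume "x \<in> Fpm m"
    thus "(\<lambda>i. if i < m then restrict x {..<m} i else 0) = x"
      by (auto simp: Fpm_def fun_eq_iff)
  next
    fix e :: "nat \<Rightarrow> 'p mod_ring" assume "e \<in> PiE {..<m} (\<lambda>_. UNIV)"
    thus "restrict (\<lambda>i. if i < m then e i else 0) {..<m} = e"
      by (auto simp: fun_eq_iff PiE_def extensional_def)
  qed
  hence "card (Fpm m :: (nat \<Rightarrow> 'p mod_ring) set) = card (PiE {..<m} (\<lambda>_. UNIV :: 'p mod_ring set))"
    by (rule bij_betw_same_card)
  also have "\<dots> = CARD('p) ^ m" by (simp add: card_PiE)
  finally show ?thesis .
qed

lemma subspace_param:
  fixes H :: "('p::prime_card,'n::finite) Fpn set"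
  assumes H: "vec.subspace H"
  shows "\<exists>\<phi> :: (nat \<Rightarrow> 'p mod_ring) \<Rightarrow> ('p,'n) Fpn. bij_betw \<phi> (Fpm (vec.dim H)) H
    \<and> (\<forall>x y. \<phi> (\<lambda>i. x i + y i) = \<phi> x + \<phi> y)
    \<and> (\<forall>c x. \<phi> (\<lambda>i. c * x i) = c *s \<phi> x)"
proof -
  obtain B where B: "B \<subseteq> H" "vec.independent B" "H \<subseteq> vec.span B" "card B = vec.dim H"
    by (rule vec.basis_exists)
  define m where "m = vec.dim H"
  have fB: "finite B" using B(2) vec.independent_explicit by blast
  obtain e where e: "bij_betw e {0..<m} B" using ex_bij_betw_nat_finite[OF fB] B(4) m_def by auto
  define \<phi> where "\<phi> = (\<lambda>x::nat \<Rightarrow> 'p mod_ring. \<Sum>i<m. x i *s e i)"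
  have add: "\<phi> (\<lambda>i. x i + y i) = \<phi> x + \<phi> y" for x y
    unfolding \<phi>_def by (simp add: vector_sadd_rdistrib sum.distrib)
  have scale: "\<phi> (\<lambda>i. c * x i) = c *s \<phi> x" for c x
    unfolding \<phi>_def by (simp add: vec.scale_sum_right vector_smult_assoc)
  have reidx: "(\<Sum>i<m. x i *s e i) = (\<Sum>v\<in>B. x (inv_into {0..<m} e v) *s v)" for x :: "nat \<Rightarrow> 'p mod_ring"
  proof -
    have "(\<Sum>v\<in>B. x (inv_into {0..<m} e v) *s v) = (\<Sum>i\<in>{0..<m}. x (inv_into {0..<m} e (e i)) *s e i)"
      using sum.reindex_bij_betw[OF e, of "\<lambda>v. x (inv_into {0..<m} e v) *s v"] by simp
    also have "\<dots> = (\<Sum>i<m. x i *s e i)"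
      using e by (intro sum.cong) (auto simp: bij_betw_def)
    finally show ?thesis by simp
  qed
  have inj: "inj_on \<phi> (Fpm m)"
  proof (rule inj_onI)
    fix x y assume x: "x \<in> Fpm m" and y: "y \<in> Fpm m" and eq: "\<phi> x = \<phi> y"
    have "\<phi> (\<lambda>i. x i + (-1) * y i) = 0" using eq add[of x "\<lambda>i. (-1) * y i"] scale[of "-1" y] by simp
    hence eq0: "(\<Sum>v\<in>B. (\<lambda>i. x i + (-1) * y i) (inv_into {0..<m} e v) *s v) = 0"
      unfolding \<phi>_def reidx .
    have ind: "\<forall>c. (\<Sum>v\<in>B. c v *s v) = 0 \<longrightarrow> (\<forall>v\<in>B. c v = 0)"
      using B(2) vec.independent_explicit by blast
    have z: "\<forall>v\<in>B. (\<lambda>i. x i + (-1) * y i) (inv_into {0..<m} e v) = 0"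
      using spec[OF ind, of "\<lambda>v. x (inv_into {0..<m} e v) + (-1) * y (inv_into {0..<m} e v)"] eq0 by simp
    show "x = y"
    proof
      fix i
      show "x i = y i"
      proof (cases "i < m")
        case True
        hence "e i \<in> B" "inv_into {0..<m} e (e i) = i" using e by (auto simp: bij_betw_def)
        hence "x i + (-1) * y i = 0" using z by force
        thus ?thesis by (simp add: algebra_simps)
      next
        case False
        thus ?thesis using x y by (simp add: Fpm_def)
      qed
    qed
  qed
  have img: "\<phi> ` Fpm m = H"
  proof
    show "\<phi> ` Fpm m \<subseteq> H"
    proof
      fix z assume "z \<in> \<phi> ` Fpm m"
      then obtain x where "z = \<phi> x" by blast
      moreover have "e i \<in> H" if "i < m" for i using e B(1) that by (auto simp: bij_betw_def)
      ultimately show "z \<in> H" unfolding \<phi>_def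
        by (auto intro!: vec.subspace_sum[OF H] vec.subspace_scale[OF H])
    qed
    show "H \<subseteq> \<phi> ` Fpm m"
    proof
      fix y assume "y \<in> H"
      hence "y \<in> vec.span B" using B(3) by blast
      then obtain u where u: "y = (\<Sum>v\<in>B. u v *s v)" using vec.span_finite[OF fB] by blast
      define x where "x = (\<lambda>i. if i < m then u (e i) else 0)"
      have "x \<in> Fpm m" by (simp add: x_def Fpm_def)
      moreover have "\<phi> x = y"
      proof -
        have "\<phi> x = (\<Sum>v\<in>B. x (inv_into {0..<m} e v) *s v)" unfolding \<phi>_def by (rule reidx)
        also have "\<dots> = (\<Sum>v\<in>B. u v *s v)"
        proof (intro sum.cong refl)
          fix v assume "v \<in> B"
          hence "inv_into {0..<m} e v < m" "e (inv_into {0..<m} e v) = v"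
            using e by (auto simp: bij_betw_def inv_into_into f_inv_into_f)
          thus "x (inv_into {0..<m} e v) *s v = u v *s v" by (simp add: x_def)
        qed
        finally show ?thesis using u by simp
      qed
      ultimately show "y \<in> \<phi> ` Fpm m" by blast
    qed
  qed
  show ?thesis
    by (rule exI[of _ \<phi>]) (use inj img add scale in \<open>auto simp: bij_betw_def m_def\<close>)
qed

lemma card_subspace:
  fixes H :: "('p::prime_card,'n::finite) Fpn set"
  assumes H: "vec.subspace H"
  shows "card H = CARD('p) ^ vec.dim H"
proof -
  obtain \<phi> :: "(nat \<Rightarrow> 'p mod_ring) \<Rightarrow> ('p,'n) Fpn" where "bij_betw \<phi> (Fpm (vec.dim H)) H"
    using subspace_param[OF H] by blast
  hence "card H = card (Fpm (vec.dim H) :: (nat \<Rightarrow> 'p mod_ring) set)" by (simp add: bij_betw_same_card)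
  thus ?thesis by (simp add: card_Fpm)
qed

lemma dim_hyper:
  fixes K :: "('p::prime_card,'n::finite) Fpn set"
  assumes K: "vec.subspace K"
  shows "vec.dim K \<le> vec.dim {y\<in>K. dotp r y = 0} + 1"
proof (cases "\<forall>y\<in>K. dotp r y = 0")
  case True
  hence "{y\<in>K. dotp r y = 0} = K" by auto
  thus ?thesis by simp
next
  case False
  then obtain y0 where y0: "y0 \<in> K" "dotp r y0 \<noteq> 0" by blast
  define K0 where "K0 = {y\<in>K. dotp r y = 0}"
  have "K \<subseteq> vec.span (insert y0 K0)"
  proof
    fix y assume y: "y \<in> K"
    define c where "c = dotp r y / dotp r y0"
    have "y - c *s y0 \<in> K0"
      using y y0 vec.subspace_diff[OF K y vec.subspace_scale[OF K y0(1)]]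
      by (simp add: K0_def c_def dotp_diff_right dotp_scale_right)
    hence "y - c *s y0 \<in> vec.span (insert y0 K0)" by (simp add: vec.span_base)
    moreover have "c *s y0 \<in> vec.span (insert y0 K0)" by (simp add: vec.span_base vec.span_scale)
    ultimately have "(y - c *s y0) + c *s y0 \<in> vec.span (insert y0 K0)" by (rule vec.span_add)
    thus "y \<in> vec.span (insert y0 K0)" by simp
  qed
  hence "vec.dim K \<le> vec.dim (vec.span (insert y0 K0))" by (rule vec.dim_subset)
  also have "\<dots> = vec.dim (insert y0 K0)" by simp
  also have "\<dots> \<le> vec.dim K0 + 1" by (simp add: vec.dim_insert)
  finally show ?thesis unfolding K0_def .
qed

lemma subspace_kernels:
  fixes H :: "('p::prime_card,'n::finite) Fpn set"
  assumes H: "vec.subspace H"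
  shows "vec.subspace {y\<in>H. \<forall>r\<in>R. dotp r y = 0}"
  unfolding vec.subspace_def
  using vec.subspace_0[OF H] vec.subspace_add[OF H] vec.subspace_scale[OF H]
  by (auto simp: dotp_add_right dotp_scale_right)

lemma dim_kernels:
  fixes H :: "('p::prime_card,'n::finite) Fpn set"
  assumes H: "vec.subspace H" and R: "finite R"
  shows "vec.dim H \<le> vec.dim {y\<in>H. \<forall>r\<in>R. dotp r y = 0} + card R"
  using R
proof (induct R rule: finite_induct)
  case empty thus ?case by simp
next
  case (insert r R)
  define K where "K = {y\<in>H. \<forall>r\<in>R. dotp r y = 0}"
  have K: "vec.subspace K" unfolding K_def by (rule subspace_kernels[OF H])
  have eq: "{y\<in>H. \<forall>r'\<in>insert r R. dotp r' y = 0} = {y\<in>K. dotp r y = 0}"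
    unfolding K_def by auto
  have "vec.dim H \<le> vec.dim K + card R" using insert unfolding K_def by simp
  also have "vec.dim K \<le> vec.dim {y\<in>K. dotp r y = 0} + 1" by (rule dim_hyper[OF K])
  finally show ?case using insert eq by simp
qed

definition Hp :: "('p::prime_card,'n::finite) Fpn set \<Rightarrow> ('p,'n) Fpn set" where
  "Hp H = {r. \<forall>y\<in>H. dotp r y = 0}"

definition rho :: "('p::prime_card,'n::finite) Fpn set \<Rightarrow> ('p,'n) Fpn \<Rightarrow> ('p,'n) Fpn \<Rightarrow> 'p mod_ring" where
  "rho H r = restrict (dotp r) H"

lemma rho_eq: "rho H r' = rho H r \<longleftrightarrow> (\<forall>y\<in>H. dotp r' y = dotp r y)"
  unfolding rho_def by (metis restrict_apply' restrict_ext)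

lemma fiber_card: "card {r'. rho H r' = rho H r} = card (Hp H)"
proof -
  have "bij_betw (\<lambda>h. r + h) (Hp H) {r'. rho H r' = rho H r}"
  proof (rule bij_betwI[where g="\<lambda>r'. r' - r"])
    show "(\<lambda>h. r + h) \<in> Hp H \<rightarrow> {r'. rho H r' = rho H r}"
      by (auto simp: Hp_def rho_eq dotp_add_left)
    show "(\<lambda>r'. r' - r) \<in> {r'. rho H r' = rho H r} \<rightarrow> Hp H"
      by (auto simp: Hp_def rho_eq dotp_diff_left)
  qed auto
  from bij_betw_same_card[OF this] show ?thesis by simp
qed

lemma closed_count:
  assumes cl: "\<And>r r'. r \<in> S \<Longrightarrow> rho H r' = rho H r \<Longrightarrow> r' \<in> S"
  shows "card S = card (rho H ` S) * card (Hp H)"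
proof -
  have "card S = (\<Sum>r\<in>S. 1::nat)" by simp
  also have "\<dots> = (\<Sum>\<phi>\<in>rho H ` S. \<Sum>r\<in>{x. x \<in> S \<and> rho H x = \<phi>}. 1)"
    by (rule sum.image_gen) simp
  also have "\<dots> = (\<Sum>\<phi>\<in>rho H ` S. card (Hp H))"
  proof (intro sum.cong refl)
    fix \<phi> assume "\<phi> \<in> rho H ` S"
    then obtain r0 where r0: "r0 \<in> S" "\<phi> = rho H r0" by blast
    have "{x. x \<in> S \<and> rho H x = \<phi>} = {r'. rho H r' = rho H r0}"
      using r0 cl by auto
    thus "(\<Sum>r\<in>{x. x \<in> S \<and> rho H x = \<phi>}. 1) = card (Hp H)"
      by (simp add: fiber_card)
  qed
  also have "\<dots> = card (rho H ` S) * card (Hp H)" by simp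
  finally show ?thesis .
qed

lemma rho_image_bound:
  fixes H :: "('p::prime_card,'n::finite) Fpn set"
  assumes H: "vec.subspace H"
  shows "card (rho H ` UNIV) \<le> card H"
proof -
  obtain B where B: "B \<subseteq> H" "vec.independent B" "H \<subseteq> vec.span B" "card B = vec.dim H"
    by (rule vec.basis_exists)
  have fB: "finite B" using B(2) vec.independent_explicit by blast
  define \<kappa> where "\<kappa> = (\<lambda>r. restrict (dotp r) B)"
  define G where "G = (\<lambda>k. rho H (SOME r. \<kappa> r = k))"
  have det: "rho H r = rho H r'" if "\<kappa> r = \<kappa> r'" for r r'
  proof -
    have onB: "\<forall>v\<in>B. dotp r v = dotp r' v" using that unfolding \<kappa>_def by (metis restrict_apply')
    have "dotp r y = dotp r' y" if "y \<in> H" for y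
    proof -
      have "y \<in> vec.span B" using that B(3) by blast
      then obtain u where u: "y = (\<Sum>v\<in>B. u v *s v)" using vec.span_finite[OF fB] by blast
      show ?thesis using onB unfolding u dotp_sum_right dotp_scale_right by simp
    qed
    thus ?thesis by (simp add: rho_eq)
  qed
  have "rho H ` UNIV = G ` (\<kappa> ` UNIV)"
  proof -
    have "rho H r = G (\<kappa> r)" for r
    proof -
      have "\<kappa> (SOME r'. \<kappa> r' = \<kappa> r) = \<kappa> r" by (rule someI) simp
      thus ?thesis unfolding G_def by (rule det[symmetric])
    qed
    thus ?thesis by (auto simp: image_image)
  qed
  hence "card (rho H ` UNIV) \<le> card (\<kappa> ` UNIV)" by (simp add: card_image_le)
  also have "\<dots> \<le> card (PiE B (\<lambda>_. UNIV :: 'p mod_ring set))"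
    by (rule card_mono) (auto simp: \<kappa>_def fB finite_PiE)
  also have "\<dots> = CARD('p) ^ card B" by (simp add: card_PiE fB)
  also have "\<dots> = card H" using card_subspace[OF H] B(4) by simp
  finally show ?thesis .
qed

lemma Hp_card_bound:
  fixes H :: "('p::prime_card,'n::finite) Fpn set"
  assumes H: "vec.subspace H"
  shows "CARD(('p,'n) Fpn) \<le> card H * card (Hp H)"
proof -
  have "CARD(('p,'n) Fpn) = card (rho H ` UNIV) * card (Hp H)"
    by (rule closed_count) simp
  also have "\<dots> \<le> card H * card (Hp H)" using rho_image_bound[OF H] by simp
  finally show ?thesis .
qed

lemma spec_card:
  fixes f :: "('p::prime_card,'n::finite) Fpn \<Rightarrow> real"
  assumes f: "\<And>x. 0 \<le> f x \<and> f x \<le> 1" and eps: "\<epsilon> > 0"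
  shows "real (card {r. cmod (fou (restr f g H) r) > \<epsilon>}) * \<epsilon>^2 \<le> real (card H) / real CARD(('p,'n) Fpn)"
proof -
  define Sp where "Sp = {r. cmod (fou (restr f g H) r) > \<epsilon>}"
  have "real (card Sp) * \<epsilon>^2 = (\<Sum>r\<in>Sp. \<epsilon>^2)" by simp
  also have "\<dots> \<le> (\<Sum>r\<in>Sp. (cmod (fou (restr f g H) r))^2)"
    using eps by (intro sum_mono power_mono) (auto simp: Sp_def)
  also have "\<dots> \<le> (\<Sum>r\<in>UNIV. (cmod (fou (restr f g H) r))^2)"
    by (intro sum_mono2) auto
  also have "\<dots> \<le> real (card H) / real CARD(('p,'n) Fpn)" by (rule parseval_restr[OF f])
  finally show ?thesis unfolding Sp_def .
qed

lemma spec_rho_card: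
  fixes f :: "('p::prime_card,'n::finite) Fpn \<Rightarrow> real"
  assumes f: "\<And>x. 0 \<le> f x \<and> f x \<le> 1" and eps: "\<epsilon> > 0" and H: "vec.subspace H"
  shows "real (card (rho H ` {r. cmod (fou (restr f g H) r) > \<epsilon>}))
     \<le> (real (card H))^2 / ((real CARD(('p,'n) Fpn))^2 * \<epsilon>^2)"
proof -
  define N where "N = real CARD(('p,'n) Fpn)"
  define M where "M = real (card H)"
  define Sp where "Sp = {r. cmod (fou (restr f g H) r) > \<epsilon>}"
  have N0: "N > 0" unfolding N_def by simp
  have M0: "M > 0" unfolding M_def using subspace_card_pos[OF H] by simp
  have cl: "r' \<in> Sp" if "r \<in> Sp" "rho H r' = rho H r" for r r'
    using that fou_class[OF H, of r r' f g] by (simp add: Sp_def rho_eq)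
  have c1: "real (card Sp) = real (card (rho H ` Sp)) * real (card (Hp H))"
    using closed_count[of Sp H, OF cl] by simp
  have c2: "N \<le> M * real (card (Hp H))"
    using Hp_card_bound[OF H] unfolding N_def M_def by (metis of_nat_le_iff of_nat_mult)
  have c3: "real (card Sp) * \<epsilon>^2 \<le> M / N"
    unfolding Sp_def M_def N_def by (rule spec_card[OF f eps])
  have hp0: "real (card (Hp H)) > 0" using c2 N0 M0
    by (metis mult_zero_right not_less of_nat_0_le_iff order.antisym order.strict_trans1)
  have "real (card (rho H ` Sp)) * (N / M) \<le> real (card (rho H ` Sp)) * real (card (Hp H))"
    using c2 M0 by (intro mult_left_mono) (auto simp: field_simps)
  also have "\<dots> = real (card Sp)" using c1 by simp
  also have "\<dots> \<le> M / (N * \<epsilon>^2)" using c3 eps N0 by (simp add: field_simps)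
  finally have "real (card (rho H ` Sp)) * (N / M) \<le> M / (N * \<epsilon>^2)" .
  hence "real (card (rho H ` Sp)) \<le> M / (N * \<epsilon>^2) / (N / M)"
    using N0 M0 by (subst pos_le_divide_eq) auto
  also have "\<dots> = M^2 / (N^2 * \<epsilon>^2)" using N0 M0 by (simp add: field_simps power2_eq_square)
  finally show ?thesis unfolding Sp_def M_def N_def .
qed

lemma cosets_count:
  fixes H :: "('p::prime_card,'n::finite) Fpn set"
  assumes H: "vec.subspace H"
  shows "card ((\<lambda>g. {x. x - g \<in> H}) ` UNIV) * card H = CARD(('p,'n) Fpn)"
proof -
  define Q where "Q = (\<lambda>g. {x. x - g \<in> (H::('p,'n) Fpn set)}) ` UNIV"
  have U: "\<Union>Q = UNIV"
  proof -
    have "g \<in> {x. x - g \<in> H}" for g using vec.subspace_0[OF H] by simp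
    thus ?thesis unfolding Q_def by blast
  qed
  have disj: "C1 \<inter> C2 = {}" if C1Q: "C1 \<in> Q" and C2Q: "C2 \<in> Q" and ne: "C1 \<noteq> C2" for C1 C2
  proof (rule ccontr)
    assume "C1 \<inter> C2 \<noteq> {}"
    then obtain z where z: "z \<in> C1" "z \<in> C2" by blast
    obtain g1 g2 where g: "C1 = {x. x - g1 \<in> H}" "C2 = {x. x - g2 \<in> H}" using C1Q C2Q unfolding Q_def by blast
    have "x - g1 \<in> H \<longleftrightarrow> x - g2 \<in> H" for x
    proof -
      have d: "g2 - g1 \<in> H" using vec.subspace_diff[OF H, of "z - g1" "z - g2"] z g by simp
      show ?thesis
      proof
        assume a: "x - g1 \<in> H" show "x - g2 \<in> H" using vec.subspace_diff[OF H a d] by (simp add: algebra_simps)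
      next
        assume a: "x - g2 \<in> H" show "x - g1 \<in> H" using vec.subspace_add[OF H a d] by (simp add: algebra_simps)
      qed
    qed
    hence "C1 = C2" using g by auto
    thus False using ne by simp
  qed
  have "CARD(('p,'n) Fpn) = card (\<Union>Q)" using U by simp
  also have "\<dots> = (\<Sum>C\<in>Q. card C)"
    by (rule card_Union_disjoint) (auto simp: pairwise_def disjnt_def disj)
  also have "\<dots> = (\<Sum>C\<in>Q. card H)"
    by (intro sum.cong refl) (auto simp: Q_def card_coset)
  also have "\<dots> = card Q * card H" by simp
  finally show ?thesis unfolding Q_def by simp
qed

lemma restr_coset_eq:
  assumes H: "vec.subspace H" and "q - g \<in> H"
  shows "restr f q H = restr f g H"
proof -
  have "x - q \<in> H \<longleftrightarrow> x - g \<in> H" for x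
  proof
    assume a: "x - q \<in> H" show "x - g \<in> H" using vec.subspace_add[OF H a assms(2)] by (simp add: algebra_simps)
  next
    assume a: "x - g \<in> H" show "x - q \<in> H" using vec.subspace_diff[OF H a assms(2)] by (simp add: algebra_simps)
  qed
  thus ?thesis unfolding restr_def by auto
qed

lemma spectral_subspace:
  fixes f :: "('p::prime_card,'n::finite) Fpn \<Rightarrow> real"
  assumes f: "\<And>x. 0 \<le> f x \<and> f x \<le> 1" and eps: "\<epsilon> > 0" and H: "vec.subspace H"
  shows "\<exists>H'. vec.subspace H' \<and> H' \<subseteq> H \<and>
    real (vec.dim H) \<le> real (vec.dim H') + real (card H) / (real CARD(('p,'n) Fpn) * \<epsilon>^2) \<and>
    (\<forall>g r. \<not> (\<forall>y\<in>H'. dotp r y = 0) \<longrightarrow> cmod (fou (restr f g H) r) \<le> \<epsilon>)"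
proof -
  define N where "N = real CARD(('p,'n) Fpn)"
  define M where "M = real (card H)"
  have N0: "N > 0" unfolding N_def by simp
  have M0: "M > 0" unfolding M_def using subspace_card_pos[OF H] by simp
  define Sp where "Sp = (\<lambda>g. {r. cmod (fou (restr f g H) r) > \<epsilon>})"
  define S where "S = (\<Union>g. Sp g)"
  define Q where "Q = (\<lambda>g. {x. x - g \<in> (H::('p,'n) Fpn set)}) ` UNIV"
  define rep where "rep = (\<lambda>C::('p,'n) Fpn set. SOME g. g \<in> C)"
  have repQ: "\<exists>q\<in>rep ` Q. Sp g = Sp q" for g
  proof -
    define C where "C = {x. x - g \<in> H}"
    have "g \<in> C" unfolding C_def using vec.subspace_0[OF H] by simp
    hence "rep C \<in> C" unfolding rep_def by (rule someI)
    hence "rep C - g \<in> H" unfolding C_def by simp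
    hence "restr f (rep C) H = restr f g H" by (rule restr_coset_eq[OF H])
    hence "Sp g = Sp (rep C)" unfolding Sp_def by simp
    moreover have "rep C \<in> rep ` Q" unfolding Q_def C_def by blast
    ultimately show ?thesis by blast
  qed
  have S_eq: "S = (\<Union>q\<in>rep ` Q. Sp q)"
  proof
    show "S \<subseteq> (\<Union>q\<in>rep ` Q. Sp q)"
    proof
      fix r assume "r \<in> S"
      then obtain g where g: "r \<in> Sp g" unfolding S_def by blast
      from repQ[of g] obtain q where "q \<in> rep ` Q" "Sp g = Sp q" by blast
      thus "r \<in> (\<Union>q\<in>rep ` Q. Sp q)" using g by blast
    qed
    show "(\<Union>q\<in>rep ` Q. Sp q) \<subseteq> S" unfolding S_def by blast
  qed
  have cQ: "real (card Q) * M = N"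
    unfolding Q_def M_def N_def using arg_cong[OF cosets_count[OF H], of real] by (simp only: of_nat_mult)
  have "real (card (rho H ` S)) \<le> real (\<Sum>q\<in>rep ` Q. card (rho H ` Sp q))"
  proof -
    have "rho H ` S = (\<Union>q\<in>rep ` Q. rho H ` Sp q)" unfolding S_eq by blast
    moreover have "card (\<Union>q\<in>rep ` Q. rho H ` Sp q) \<le> (\<Sum>q\<in>rep ` Q. card (rho H ` Sp q))"
      by (rule card_UN_le) simp
    ultimately have "card (rho H ` S) \<le> (\<Sum>q\<in>rep ` Q. card (rho H ` Sp q))" by (simp only:)
    thus ?thesis by linarith
  qed
  also have "\<dots> = (\<Sum>q\<in>rep ` Q. real (card (rho H ` Sp q)))" by simp
  also have "\<dots> \<le> (\<Sum>q\<in>rep ` Q. M^2 / (N^2 * \<epsilon>^2))"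
    by (intro sum_mono) (unfold Sp_def M_def N_def, rule spec_rho_card[OF f eps H])
  also have "\<dots> = real (card (rep ` Q)) * (M^2 / (N^2 * \<epsilon>^2))" by simp
  also have "\<dots> \<le> real (card Q) * (M^2 / (N^2 * \<epsilon>^2))"
    by (intro mult_right_mono) (auto simp: card_image_le)
  also have "\<dots> = M / (N * \<epsilon>^2)"
    using cQ N0 M0 eps by (auto simp: field_simps power2_eq_square)
  finally have cS: "real (card (rho H ` S)) \<le> M / (N * \<epsilon>^2)" .
  define R where "R = (\<lambda>\<phi>. SOME r. r \<in> S \<and> rho H r = \<phi>) ` (rho H ` S)"
  have R_rep: "\<exists>r0\<in>R. rho H r0 = rho H r" if "r \<in> S" for r
  proof -
    have "\<exists>r'. r' \<in> S \<and> rho H r' = rho H r" using that by blast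
    hence "(SOME r'. r' \<in> S \<and> rho H r' = rho H r) \<in> S \<and> rho H (SOME r'. r' \<in> S \<and> rho H r' = rho H r) = rho H r"
      by (rule someI_ex)
    moreover have "(SOME r'. r' \<in> S \<and> rho H r' = rho H r) \<in> R" unfolding R_def using that by blast
    ultimately show ?thesis by blast
  qed
  define H' where "H' = {y\<in>H. \<forall>r\<in>R. dotp r y = 0}"
  have H'sub: "vec.subspace H'" unfolding H'_def by (rule subspace_kernels[OF H])
  have dimH: "vec.dim H \<le> vec.dim H' + card R" unfolding H'_def by (rule dim_kernels[OF H]) (simp add: R_def)
  have cR: "card R \<le> card (rho H ` S)" unfolding R_def by (rule card_image_le) simp
  have perp: "\<forall>y\<in>H'. dotp r y = 0" if rS: "r \<in> S" for r
  proof
    fix y assume y: "y \<in> H'"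
    obtain r0 where r0: "r0 \<in> R" "rho H r0 = rho H r" using R_rep[OF rS] by blast
    have "dotp r0 y = 0" using y r0 unfolding H'_def by blast
    moreover have "dotp r0 y = dotp r y" using r0(2) y unfolding rho_eq H'_def by blast
    ultimately show "dotp r y = 0" by simp
  qed
  have small: "\<forall>g r. \<not> (\<forall>y\<in>H'. dotp r y = 0) \<longrightarrow> cmod (fou (restr f g H) r) \<le> \<epsilon>"
  proof (intro allI impI)
    fix g r assume "\<not> (\<forall>y\<in>H'. dotp r y = 0)"
    hence "r \<notin> S" using perp by blast
    hence "\<not> \<epsilon> < cmod (fou (restr f g H) r)" unfolding S_def Sp_def by blast
    thus "cmod (fou (restr f g H) r) \<le> \<epsilon>" by simp
  qed
  have "real (vec.dim H) \<le> real (vec.dim H') + real (card R)" using dimH by linarith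
  also have "real (card R) \<le> M / (N * \<epsilon>^2)" using cR cS by linarith
  finally have "real (vec.dim H) \<le> real (vec.dim H') + M / (N * \<epsilon>^2)" by simp
  moreover have "H' \<subseteq> H" unfolding H'_def by blast
  ultimately show ?thesis using H'sub small unfolding M_def N_def by blast
qed

lemma tangent_cube:
  fixes u :: "'a \<Rightarrow> real"
  assumes A: "finite A" "A \<noteq> {}" and u: "\<And>x. x \<in> A \<Longrightarrow> u x \<ge> 0"
  shows "(sum u A)^3 \<le> (real (card A))^2 * (\<Sum>x\<in>A. (u x)^3)"
proof -
  define k where "k = real (card A)"
  have k0: "k > 0" unfolding k_def using A by (simp add: card_gt_0_iff)
  define \<mu> where "\<mu> = sum u A / k"
  have \<mu>0: "\<mu> \<ge> 0" unfolding \<mu>_def using u k0 by (simp add: sum_nonneg)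
  have pt: "(u x)^3 \<ge> 3 * \<mu>^2 * u x - 2 * \<mu>^3" if "x \<in> A" for x
  proof -
    have "0 \<le> (u x - \<mu>)^2 * (u x + 2 * \<mu>)" using u[OF that] \<mu>0 by simp
    thus ?thesis by (simp add: power2_eq_square power3_eq_cube algebra_simps)
  qed
  have "(\<Sum>x\<in>A. 3 * \<mu>^2 * u x - 2 * \<mu>^3) \<le> (\<Sum>x\<in>A. (u x)^3)"
    by (rule sum_mono) (rule pt)
  moreover have "(\<Sum>x\<in>A. 3 * \<mu>^2 * u x - 2 * \<mu>^3) = 3 * \<mu>^2 * sum u A - 2 * \<mu>^3 * k"
    by (simp add: sum_subtractf sum_distrib_left k_def)
  moreover have "sum u A = \<mu> * k" unfolding \<mu>_def using k0 by simp
  ultimately have "\<mu>^3 * k \<le> (\<Sum>x\<in>A. (u x)^3)" by (simp add: power2_eq_square power3_eq_cube algebra_simps)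
  hence "k^2 * (\<mu>^3 * k) \<le> k^2 * (\<Sum>x\<in>A. (u x)^3)" by (simp add: mult_left_mono)
  moreover have "(sum u A)^3 = k^2 * (\<mu>^3 * k)"
    using \<open>sum u A = \<mu> * k\<close> by (simp add: power2_eq_square power3_eq_cube)
  ultimately show ?thesis unfolding k_def by simp
qed

lemma pow_bound:
  fixes s K C :: real
  assumes s: "s \<ge> 0" and C: "C > 0" and K: "K > 0" and sC: "s powr C \<le> K"
  shows "s^2 \<le> K powr (2 / C)"
proof -
  have "s = (s powr C) powr (1 / C)" using s C by (simp add: powr_powr)
  also have "\<dots> \<le> K powr (1 / C)" using sC s C by (intro powr_mono2) auto
  finally have "s \<le> K powr (1/C)" .
  hence "s^2 \<le> (K powr (1/C))^2" using s by (intro power_mono) auto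
  also have "\<dots> = (K powr (1/C)) powr (real 2)" using K by (subst powr_realpow) auto
  also have "\<dots> = K powr (1/C * real 2)" by (rule powr_powr)
  also have "\<dots> = K powr (2 / C)" by simp
  finally show ?thesis .
qed

lemma cube_increment:
  fixes F :: "('p::prime_card,'n::finite) Fpn \<Rightarrow> real" and H :: "('p,'n) Fpn set"
  assumes H: "vec.subspace H" and m1: "vec.dim H \<ge> 1"
    and C: "C \<ge> 1" and Cprop: "three_AP_const TYPE('p) C"
    and F: "\<And>x. 0 \<le> F x \<and> F x \<le> 1"
    and a_def: "a = (\<Sum>y\<in>H. F (y+g)) / real (card H)" and a0: "a > 0"
    and th0: "\<theta> > 0"
    and T: "(\<Sum>y\<in>H. \<Sum>d\<in>H. F (y+g) * F (y+g+d) * F (y+g + 2 *s d)) \<le> \<theta> * a^3 * (real (card H))^2"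
  shows "(\<Sum>y\<in>H. (F (y+g))^3) / real (card H) \<ge> a^3 / 8 * (8 * \<theta>) powr (- 2 / C)"
proof -
  define m where "m = vec.dim H"
  define M where "M = real (card H)"
  have Mp: "M = real CARD('p) ^ m" unfolding M_def m_def using card_subspace[OF H] by simp
  have M0: "M > 0" unfolding M_def using subspace_card_pos[OF H] by simp
  have fH: "finite H" by simp
  obtain \<phi> :: "(nat \<Rightarrow> 'p mod_ring) \<Rightarrow> ('p,'n) Fpn" where
    bij: "bij_betw \<phi> (Fpm m) H" and add: "\<forall>x y. \<phi> (\<lambda>i. x i + y i) = \<phi> x + \<phi> y"
    and scale: "\<forall>c x. \<phi> (\<lambda>i. c * x i) = c *s \<phi> x"
    using subspace_param[OF H] unfolding m_def by blast
  define t where "t = a / 2"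
  have t0: "t > 0" unfolding t_def using a0 by simp
  define X where "X = {y\<in>H. F (y+g) \<ge> t}"
  define X' where "X' = {z\<in>Fpm m. \<phi> z \<in> X}"
  define s where "s = real (card X) / M"
  have s0: "s \<ge> 0" unfolding s_def using M0 by simp
  have cX': "card X' = card X"
  proof -
    have "bij_betw \<phi> X' X"
    proof (rule bij_betw_subset[OF bij])
      show "X' \<subseteq> Fpm m" unfolding X'_def by blast
      show "\<phi> ` X' = X"
      proof
        show "\<phi> ` X' \<subseteq> X" unfolding X'_def by blast
        show "X \<subseteq> \<phi> ` X'"
        proof
          fix y assume y: "y \<in> X"
          hence "y \<in> H" unfolding X_def by blast
          then obtain z where "z \<in> Fpm m" "\<phi> z = y" using bij unfolding bij_betw_def by blast
          thus "y \<in> \<phi> ` X'" using y unfolding X'_def by blast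
        qed
      qed
    qed
    thus ?thesis by (rule bij_betw_same_card)
  qed
  define P' where "P' = {(z, d). z \<in> Fpm m \<and> d \<in> Fpm m \<and> z \<in> X' \<and> (\<lambda>i. z i + d i) \<in> X' \<and> (\<lambda>i. z i + 2 * d i) \<in> X'}"
  define P where "P = {(y, d). y \<in> H \<and> d \<in> H \<and> y \<in> X \<and> y + d \<in> X \<and> y + 2 *s d \<in> X}"
  have PH: "P \<subseteq> H \<times> H" unfolding P_def by blast
  have cP: "card P' \<le> card P"
  proof (rule card_inj_on_le[where f="\<lambda>(z, d). (\<phi> z, \<phi> d)"])
    have inj: "inj_on \<phi> (Fpm m)" using bij unfolding bij_betw_def by blast
    show "inj_on (\<lambda>(z, d). (\<phi> z, \<phi> d)) P'"
      using inj unfolding P'_def inj_on_def by auto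
    show "(\<lambda>(z, d). (\<phi> z, \<phi> d)) ` P' \<subseteq> P"
    proof
      fix q assume "q \<in> (\<lambda>(z, d). (\<phi> z, \<phi> d)) ` P'"
      then obtain z d where q: "q = (\<phi> z, \<phi> d)" and zd: "(z, d) \<in> P'" by force
      have z: "z \<in> Fpm m" "d \<in> Fpm m" "z \<in> X'" "(\<lambda>i. z i + d i) \<in> X'" "(\<lambda>i. z i + 2 * d i) \<in> X'"
        using zd unfolding P'_def by auto
      have e1: "\<phi> (\<lambda>i. z i + d i) = \<phi> z + \<phi> d" using add by simp
      have e2: "\<phi> (\<lambda>i. z i + 2 * d i) = \<phi> z + 2 *s \<phi> d"
        using add[rule_format, of z "\<lambda>i. 2 * d i"] scale[rule_format, of 2 d] by simp
      have "\<phi> d \<in> H" using bij z(2) unfolding bij_betw_def by blast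
      moreover have "\<phi> z \<in> X" "\<phi> z + \<phi> d \<in> X" "\<phi> z + 2 *s \<phi> d \<in> X"
        using z e1 e2 unfolding X'_def by auto
      moreover have "\<phi> z \<in> H" using \<open>\<phi> z \<in> X\<close> unfolding X_def by blast
      ultimately show "q \<in> P" unfolding q P_def by blast
    qed
    show "finite P" by simp
  qed
  have Cm: "real (card P') \<ge> (real (card X') / real CARD('p) ^ m) powr C * real CARD('p) ^ (2 * m)"
  proof -
    have "X' \<subseteq> Fpm m" unfolding X'_def by blast
    moreover have "m \<ge> 1" using m1 unfolding m_def .
    ultimately show ?thesis using Cprop unfolding three_AP_const_def P'_def by blast
  qed
  have sCM: "s powr C * M^2 \<le> real (card P)"
  proof -
    have "real CARD('p) ^ (2 * m) = M^2" using Mp by (simp add: power_mult_distrib[symmetric] power_mult mult.commute[of 2])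
    moreover have "real (card X') / real CARD('p) ^ m = s" using Mp cX' unfolding s_def by simp
    ultimately show ?thesis using Cm cP by (metis of_nat_le_iff order.trans)
  qed
  have TP: "t^3 * real (card P) \<le> (\<Sum>y\<in>H. \<Sum>d\<in>H. F (y+g) * F (y+g+d) * F (y+g + 2 *s d))"
  proof -
    have "t^3 * real (card P) = (\<Sum>q\<in>P. t^3)" by simp
    also have "\<dots> \<le> (\<Sum>q\<in>P. (\<lambda>(y,d). F (y+g) * F (y+g+d) * F (y+g + 2 *s d)) q)"
    proof (rule sum_mono)
      fix q assume "q \<in> P"
      then obtain y d where q: "q = (y, d)" and yd: "y \<in> X" "y + d \<in> X" "y + 2 *s d \<in> X" unfolding P_def by blast
      have f1: "F (y+g) \<ge> t" using yd(1) unfolding X_def by blast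
      have f2: "F (y+g+d) \<ge> t" using yd(2) unfolding X_def by (simp add: add_ac)
      have f3: "F (y+g+2 *s d) \<ge> t" using yd(3) unfolding X_def by (simp add: add_ac)
      have "t * t * t \<le> F (y+g) * F (y+g+d) * F (y+g + 2 *s d)"
        using f1 f2 f3 t0 by (intro mult_mono) auto
      thus "t^3 \<le> (\<lambda>(y,d). F (y+g) * F (y+g+d) * F (y+g + 2 *s d)) q"
        unfolding q by (simp add: power3_eq_cube)
    qed
    also have "\<dots> \<le> (\<Sum>q\<in>H \<times> H. (\<lambda>(y,d). F (y+g) * F (y+g+d) * F (y+g + 2 *s d)) q)"
      using PH F by (intro sum_mono2) auto
    also have "\<dots> = (\<Sum>y\<in>H. \<Sum>d\<in>H. F (y+g) * F (y+g+d) * F (y+g + 2 *s d))"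
      by (simp add: sum.cartesian_product)
    finally show ?thesis .
  qed
  have sC: "s powr C \<le> 8 * \<theta>"
  proof -
    have "t^3 * (s powr C * M^2) \<le> t^3 * real (card P)"
      using sCM t0 by (intro mult_left_mono) auto
    also have "\<dots> \<le> \<theta> * a^3 * M^2" using TP T unfolding M_def by linarith
    finally have "t^3 * (s powr C) * M^2 \<le> (8 * \<theta>) * t^3 * M^2"
      unfolding t_def by (simp add: power3_eq_cube mult_ac)
    thus ?thesis using t0 M0 by (simp add: mult_le_cancel_right_pos mult_le_cancel_left_pos mult.assoc)
  qed
  have sumH: "(\<Sum>y\<in>H. F (y+g)) = M * a" unfolding a_def M_def using M0 M_def by simp
  have sumX: "(\<Sum>y\<in>X. F (y+g)) \<ge> M * a / 2"
  proof -
    have XH: "X \<subseteq> H" unfolding X_def by blast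
    have "(\<Sum>y\<in>H. F (y+g)) = (\<Sum>y\<in>X. F (y+g)) + (\<Sum>y\<in>H - X. F (y+g))"
      using XH by (simp add: sum.subset_diff)
    moreover have "(\<Sum>y\<in>H - X. F (y+g)) \<le> (\<Sum>y\<in>H - X. t)"
      by (intro sum_mono) (auto simp: X_def)
    moreover have "(\<Sum>y\<in>H - X. t) \<le> M * t"
      using t0 card_mono[OF fH, of "H - X"] unfolding M_def by (simp add: mult_right_mono)
    ultimately show ?thesis using sumH unfolding t_def by linarith
  qed
  have Xne: "X \<noteq> {}"
  proof
    assume "X = {}"
    hence "M * a / 2 \<le> 0" using sumX by simp
    moreover have "M * a > 0" using a0 M0 by simp
    ultimately show False by simp
  qed
  have sp: "s > 0" unfolding s_def using Xne M0 by (simp add: card_gt_0_iff)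
  have tc: "(\<Sum>y\<in>X. F (y+g))^3 \<le> (real (card X))^2 * (\<Sum>y\<in>X. (F (y+g))^3)"
    by (rule tangent_cube) (use Xne F in auto)
  have "(M * a / 2)^3 \<le> (\<Sum>y\<in>X. F (y+g))^3"
    using sumX a0 M0 by (intro power_mono) auto
  also note tc
  also have "(\<Sum>y\<in>X. (F (y+g))^3) \<le> (\<Sum>y\<in>H. (F (y+g))^3)"
    using F by (intro sum_mono2) (auto simp: X_def)
  finally have key: "(M * a / 2)^3 \<le> (s * M)^2 * (\<Sum>y\<in>H. (F (y+g))^3)"
    using M0 unfolding s_def by (simp add: mult_left_mono)
  have s2: "s^2 \<le> (8 * \<theta>) powr (2 / C)"
    by (rule pow_bound[OF s0 _ _ sC]) (use C th0 in auto)
  have pos: "(8 * \<theta>) powr (2 / C) > 0" using th0 by simp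
  have mm: "(- 2 / C) = - (2 / C)" by simp
  have "a^3 / 8 * (8 * \<theta>) powr (- 2 / C) = a^3 / 8 * inverse ((8 * \<theta>) powr (2 / C))"
    unfolding mm by (simp only: powr_minus)
  also have "\<dots> = (a^3 / 8) / (8 * \<theta>) powr (2 / C)" by (simp only: divide_inverse)
  also have "\<dots> \<le> (a^3 / 8) / s^2"
    using sp s2 a0 pos by (intro divide_left_mono) auto
  also have "\<dots> \<le> (\<Sum>y\<in>H. (F (y+g))^3) / M"
  proof -
    have "(a^3 / 8) * (s^2 * M) = (M * a / 2)^3 / M^2 * s^2"
      using M0 by (simp add: power2_eq_square power3_eq_cube field_simps)
    also have "\<dots> \<le> (s * M)^2 * (\<Sum>y\<in>H. (F (y+g))^3) / M^2 * s^2"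
      using key M0 sp by (intro mult_right_mono divide_right_mono) auto
    also have "\<dots> = (\<Sum>y\<in>H. (F (y+g))^3) * s^2 * s^2"
      using M0 by (simp add: power2_eq_square field_simps)
    finally have "(a^3 / 8) * (s^2 * M) \<le> (\<Sum>y\<in>H. (F (y+g))^3) * s^2 * s^2" .
    hence "(a^3 / 8) * M \<le> (\<Sum>y\<in>H. (F (y+g))^3) * s^2"
      using sp by (simp add: power2_eq_square mult_le_cancel_right_pos mult.assoc[symmetric])
    thus ?thesis using sp M0 by (simp add: field_simps)
  qed
  finally show ?thesis unfolding M_def .
qed

lemma subspace_ne: "vec.subspace K \<Longrightarrow> K \<noteq> {}"
  using vec.subspace_0 by blast

lemma double_count:
  fixes \<phi> :: "('p::prime_card,'n::finite) Fpn \<Rightarrow> real"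
  shows "(\<Sum>g\<in>UNIV. \<Sum>y\<in>H. \<phi> (y+g)) = real (card H) * (\<Sum>x\<in>UNIV. \<phi> x)"
proof -
  have "(\<Sum>g\<in>UNIV. \<Sum>y\<in>H. \<phi> (y+g)) = (\<Sum>y\<in>H. \<Sum>g\<in>UNIV. \<phi> (y+g))" by (rule sum.swap)
  also have "\<dots> = (\<Sum>y\<in>H. \<Sum>x\<in>UNIV. \<phi> x)" by (intro sum.cong refl sum_shift)
  also have "\<dots> = real (card H) * (\<Sum>x\<in>UNIV. \<phi> x)" by simp
  finally show ?thesis .
qed

lemma coset_density_range:
  fixes f :: "('p::prime_card,'n::finite) Fpn \<Rightarrow> real"
  assumes f: "\<And>x. 0 \<le> f x \<and> f x \<le> 1" and K: "vec.subspace K"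
  shows "0 \<le> coset_density f K g \<and> coset_density f K g \<le> 1"
proof -
  have K0: "real (card K) > 0" using subspace_card_pos[OF K] by simp
  have "(\<Sum>x\<in>K. f (x + g)) \<le> (\<Sum>x\<in>K. 1)" using f by (intro sum_mono) auto
  hence "(\<Sum>x\<in>K. f (x + g)) \<le> real (card K)" by simp
  moreover have "(\<Sum>x\<in>K. f (x + g)) \<ge> 0" using f by (intro sum_nonneg) auto
  ultimately show ?thesis unfolding coset_density_def using K0 by (simp add: divide_le_eq_1)
qed

lemma avg_F:
  fixes f :: "('p::prime_card,'n::finite) Fpn \<Rightarrow> real"
  assumes H: "vec.subspace H" and H': "vec.subspace H'" and sub: "H' \<subseteq> H"
  shows "(\<Sum>y\<in>H. coset_density f H' (y+g)) / real (card H) = coset_density f H g"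
proof -
  have "(\<Sum>y\<in>H. coset_density f H' (y+g)) = (\<Sum>y\<in>H. \<Sum>z\<in>H'. f (z + (y+g))) / real (card H')"
    unfolding coset_density_def by (simp add: sum_divide_distrib)
  also have "(\<Sum>y\<in>H. \<Sum>z\<in>H'. f (z + (y+g))) = (\<Sum>z\<in>H'. \<Sum>y\<in>H. f (z + y + g))"
    by (subst sum.swap) (simp add: add_ac)
  also have "\<dots> = (\<Sum>z\<in>H'. \<Sum>y\<in>H. f (y + g))"
  proof (rule sum.cong[OF refl])
    fix z assume z: "z \<in> H'"
    hence zH: "z \<in> H" using sub by blast
    show "(\<Sum>y\<in>H. f (z + y + g)) = (\<Sum>y\<in>H. f (y + g))"
      by (rule sum.reindex_bij_witness[of _ "\<lambda>y. y - z" "\<lambda>y. z + y"])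
         (use zH vec.subspace_add[OF H] vec.subspace_diff[OF H] in \<open>auto simp: algebra_simps\<close>)
  qed
  also have "\<dots> = real (card H') * (\<Sum>y\<in>H. f (y + g))" by simp
  finally show ?thesis
    using subspace_card_pos[OF H'] subspace_ne[OF H'] subspace_ne[OF H] unfolding coset_density_def by simp
qed

lemma ap_sum:
  fixes f :: "('p::prime_card,'n::finite) Fpn \<Rightarrow> real"
  assumes H: "vec.subspace H" and H2: "card H \<ge> 2"
  shows "(\<Sum>x\<in>UNIV. \<Sum>d\<in>H. f x * f (x+d) * f (x + 2 *s d)) =
     (real (card H) - 1) * real CARD(('p,'n) Fpn) * ap_density f H + (\<Sum>x\<in>UNIV. (f x)^3)"
proof -
  have H0: "0 \<in> H" by (rule vec.subspace_0[OF H])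
  have cH: "real (card (H - {0})) = real (card H) - 1" using H0 H2 by (simp add: of_nat_diff)
  have cH0: "real (card (H - {0})) > 0" using cH H2 by simp
  have "(\<Sum>x\<in>UNIV. \<Sum>d\<in>H. f x * f (x+d) * f (x + 2 *s d)) =
     (\<Sum>x\<in>UNIV. (\<Sum>d\<in>H - {0}. f x * f (x+d) * f (x + 2 *s d)) + (f x)^3)"
  proof (intro sum.cong refl)
    fix x
    have "(\<Sum>d\<in>H. f x * f (x+d) * f (x + 2 *s d)) = f x * f (x+0) * f (x + 2 *s 0) + (\<Sum>d\<in>H - {0}. f x * f (x+d) * f (x + 2 *s d))"
      using H0 by (simp add: sum.remove)
    thus "(\<Sum>d\<in>H. f x * f (x+d) * f (x + 2 *s d)) = (\<Sum>d\<in>H - {0}. f x * f (x+d) * f (x + 2 *s d)) + (f x)^3"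
      by (simp add: power3_eq_cube)
  qed
  also have "\<dots> = (\<Sum>x\<in>UNIV. \<Sum>d\<in>H - {0}. f x * f (x+d) * f (x + 2 *s d)) + (\<Sum>x\<in>UNIV. (f x)^3)"
    by (simp add: sum.distrib)
  also have "(\<Sum>x\<in>UNIV. \<Sum>d\<in>H - {0}. f x * f (x+d) * f (x + 2 *s d)) =
     real (card (H - {0})) * real CARD(('p,'n) Fpn) * ap_density f H"
  proof -
    define c where "c = real (card (H - {0}))"
    have c0: "c \<noteq> 0" using cH0 unfolding c_def by linarith
    have N0: "real CARD(('p,'n) Fpn) \<noteq> 0" by simp
    have "real CARD(('p,'n) Fpn) * ap_density f H = (\<Sum>x\<in>UNIV. (\<Sum>d\<in>H - {0}. f x * f (x+d) * f (x + 2 *s d)) / c)"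
      unfolding ap_density_def c_def using N0 by simp
    also have "\<dots> = (\<Sum>x\<in>UNIV. \<Sum>d\<in>H - {0}. f x * f (x+d) * f (x + 2 *s d)) / c"
      by (simp add: sum_divide_distrib)
    finally show ?thesis using c0 unfolding c_def[symmetric] by (simp add: field_simps)
  qed
  finally show ?thesis using cH by simp
qed

lemma sum_coset_density:
  fixes f :: "('p::prime_card,'n::finite) Fpn \<Rightarrow> real"
  assumes H: "vec.subspace H"
  shows "(\<Sum>g\<in>UNIV. coset_density f H g) = (\<Sum>x\<in>UNIV. f x)"
proof -
  have "(\<Sum>g\<in>UNIV. coset_density f H g) = (\<Sum>g\<in>UNIV. \<Sum>y\<in>H. f (y+g)) / real (card H)"
    unfolding coset_density_def by (simp add: sum_divide_distrib)
  also have "\<dots> = (\<Sum>x\<in>UNIV. f x)"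
  proof -
    have "real (card H) \<noteq> 0" using subspace_card_pos[OF H] by linarith
    thus ?thesis unfolding double_count by simp
  qed
  finally show ?thesis .
qed

lemma final_ineq:
  fixes b \<beta> C :: real
  assumes \<beta>: "\<beta> > 0" and C: "C \<ge> 1" and b: "b \<ge> 2 powr (8 + 8 * C) * \<beta>"
  shows "b * (8 * (4 * \<beta> / b)) powr (- 2 / C) / 16 / \<beta> > (b / \<beta>) powr (1 + 1 / (2 * C))"
proof -
  define X where "X = b / \<beta>"
  have X2: "X \<ge> 2 powr (8 + 8 * C)" unfolding X_def
    by (rule pos_le_divide_eq[THEN iffD2, OF \<beta>]) (rule b)
  have "(2::real) powr (8 + 8 * C) > 0" by simp
  hence X0: "X > 0" using X2 by linarith
  have b0: "b > 0" using X0 \<beta> unfolding X_def by (simp add: zero_less_divide_iff)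
  define l where "l = ln (2::real)"
  have l0: "l > 0" unfolding l_def by simp
  define L where "L = ln X"
  have LX: "L \<ge> (8 + 8 * C) * l"
  proof -
    have "ln (2 powr (8 + 8 * C)) \<le> ln X" using X2 X0 by (subst ln_le_cancel_iff) auto
    thus ?thesis unfolding L_def l_def by (simp add: ln_powr)
  qed
  have K: "8 * (4 * \<beta> / b) = 32 / X" unfolding X_def using \<beta> b0 by (simp add: field_simps)
  define K where "K = (32 / X) powr (- 2 / C)"
  have K0: "K > 0" unfolding K_def using X0 by simp
  have lnK: "ln K = (- 2 / C) * (5 * l - L)"
  proof -
    have "ln K = (- 2 / C) * ln (32 / X)" unfolding K_def using X0 by (simp add: ln_powr)
    also have "ln (32 / X) = ln 32 - L" unfolding L_def using X0 by (simp add: ln_div)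
    also have "ln (32::real) = 5 * l"
      unfolding l_def using ln_realpow[of "2::real" 5] by simp
    finally show ?thesis .
  qed
  have ln16: "ln (16::real) = 4 * l"
    unfolding l_def using ln_realpow[of "2::real" 4] by simp
  have lhs: "b * (8 * (4 * \<beta> / b)) powr (- 2 / C) / 16 / \<beta> = X * K / 16"
    unfolding K K_def X_def by simp
  have lnL: "ln (X * K / 16) = L + (- 2 / C) * (5 * l - L) - 4 * l"
    using X0 K0 by (simp add: ln_div ln_mult lnK ln16 L_def)
  have lnR: "ln (X powr (1 + 1 / (2 * C))) = (1 + 1 / (2 * C)) * L"
    using X0 unfolding L_def by (simp add: ln_powr)
  have C0: "C > 0" using C by simp
  have key: "3 * L > 20 * l + 8 * (C * l)"
  proof -
    have "3 * L \<ge> 3 * ((8 + 8 * C) * l)" using LX by simp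
    moreover have "C * l \<ge> l" using C l0 by simp
    moreover have "3 * ((8 + 8 * C) * l) = 24 * l + 24 * (C * l)" by (simp add: algebra_simps)
    ultimately show ?thesis using l0 by linarith
  qed
  have "(L + (- 2 / C) * (5 * l - L) - 4 * l) - (1 + 1 / (2 * C)) * L = (3 * L - 20 * l - 8 * (C * l)) / (2 * C)"
    using C0 by (simp add: field_simps)
  also have "\<dots> > 0" using key C0 by (simp add: divide_pos_pos)
  finally have "ln (X powr (1 + 1 / (2 * C))) < ln (X * K / 16)" unfolding lnL lnR by (simp only: diff_gt_0_iff_gt)
  hence "X powr (1 + 1 / (2 * C)) < X * K / 16"
    using X0 K0 by (subst (asm) ln_less_cancel_iff) auto
  thus ?thesis unfolding lhs X_def .
qed

lemma dim_le_n: "vec.dim (S :: ('p::prime_card,'n::finite) Fpn set) \<le> CARD('n)"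
  using vec.dim_subset_UNIV[of S] unfolding vec.dimension_def card_cart_basis .

theorem mainTheorem6:
  fixes f :: "('p::prime_card, 'n::finite) Fpn \<Rightarrow> real"
    and H :: "('p, 'n) Fpn set"
    and C \<alpha> \<beta> :: real
  assumes p_odd: "CARD('p) \<noteq> 2"
    and C_ge: "C \<ge> 1"
    and C_prop: "three_AP_const TYPE('p) C"
    and f_range: "\<And>x. 0 \<le> f x \<and> f x \<le> 1"
    and alpha_def: "\<alpha> = (\<Sum>x\<in>UNIV. f x) / real CARD(('p, 'n) Fpn)"
    and beta_pos: "\<beta> > 0"
    and H_sub: "vec.subspace H"
    and H_card: "real (card H) \<ge> 2 * \<alpha> / \<beta>"
    and H_b: "mean_cube_density f H \<ge> 2 powr (8 + 8 * C) * \<beta>"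
    and H_lambda: "ap_density f H < \<beta>"
  shows "\<exists>H'. vec.subspace H' \<and> H' \<subseteq> H \<and>
           real (Codim H') \<le> real (Codim H) + real CARD('p) ^ (Codim H) * 36 / \<beta>^2 \<and>
           mean_cube_density f H' / \<beta> > (mean_cube_density f H / \<beta>) powr (1 + 1 / (2 * C))"
proof -
  define N where "N = real CARD(('p,'n) Fpn)"
  define M where "M = real (card H)"
  define m where "m = vec.dim H"
  define n where "n = CARD('n)"
  define b where "b = mean_cube_density f H"
  define a where "a = (\<lambda>g. coset_density f H g)"
  have N0: "N > 0" unfolding N_def by simp
  have M0: "M > 0" unfolding M_def using subspace_card_pos[OF H_sub] by simp
  have Mp: "M = real CARD('p) ^ m" unfolding M_def m_def using card_subspace[OF H_sub] by simp
  have Np: "N = real CARD('p) ^ n" unfolding N_def n_def by simp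
  have mn: "m \<le> n" unfolding m_def n_def by (rule dim_le_n)
  have p0: "real CARD('p) > 0" by simp
  have NM: "N / M = real CARD('p) ^ (n - m)"
    using Mp Np mn p0 by (simp add: power_diff)
  have a01: "0 \<le> a g \<and> a g \<le> 1" for g unfolding a_def by (rule coset_density_range[OF f_range H_sub])
  have suma: "(\<Sum>g\<in>UNIV. a g) = N * \<alpha>"
    unfolding a_def sum_coset_density[OF H_sub] alpha_def N_def using N0 N_def by simp
  have b_def': "b = (\<Sum>g\<in>UNIV. (a g)^3) / N" unfolding b_def mean_cube_density_def a_def N_def ..
  have b_le: "b \<le> \<alpha>"
  proof -
    have "(\<Sum>g\<in>UNIV. (a g)^3) \<le> (\<Sum>g\<in>UNIV. a g)"
    proof (intro sum_mono)
      fix g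
      have "(a g)^3 = a g * (a g)^2" by (simp add: power3_eq_cube power2_eq_square)
      also have "\<dots> \<le> a g * 1" using a01[of g] by (intro mult_left_mono) (auto simp: power_le_one)
      finally show "(a g)^3 \<le> a g" by simp
    qed
    hence "(\<Sum>g\<in>UNIV. (a g)^3) \<le> \<alpha> * N" using suma by (simp add: mult.commute)
    thus ?thesis unfolding b_def' using N0 by (simp add: divide_le_eq)
  qed
  have alpha_le: "\<alpha> \<le> M * \<beta> / 2"
    using H_card beta_pos unfolding M_def by (simp add: divide_le_eq field_simps)
  have pw1: "(2::real) powr (8 + 8 * C) \<ge> 1" using C_ge by (intro ge_one_powr_ge_zero) auto
  have b_ge: "b \<ge> 2 powr (8 + 8 * C) * \<beta>" unfolding b_def by (rule H_b)
  have "1 * \<beta> \<le> 2 powr (8 + 8 * C) * \<beta>" by (rule mult_right_mono[OF pw1]) (use beta_pos in simp)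
  hence b_beta: "b \<ge> \<beta>" using b_ge by linarith
  have b0: "b > 0" using b_beta beta_pos by linarith
  have "2 * \<beta> \<le> M * \<beta>" using b_le alpha_le b_beta by linarith
  hence M2: "M \<ge> 2" using beta_pos by simp
  have cardH2: "card H \<ge> 2" using M2 unfolding M_def by simp
  have m1: "m \<ge> 1"
  proof (rule ccontr)
    assume "\<not> m \<ge> 1"
    hence "m = 0" by simp
    hence "M = 1" using Mp by simp
    thus False using M2 by simp
  qed
  define \<epsilon> where "\<epsilon> = \<beta> * M / (6 * N)"
  have eps0: "\<epsilon> > 0" unfolding \<epsilon>_def using beta_pos M0 N0 by simp
  obtain H' where H': "vec.subspace H'" "H' \<subseteq> H"
    and dimH': "real (vec.dim H) \<le> real (vec.dim H') + real (card H) / (real CARD(('p,'n) Fpn) * \<epsilon>^2)"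
    and small: "\<forall>g r. \<not> (\<forall>y\<in>H'. dotp r y = 0) \<longrightarrow> cmod (fou (restr f g H) r) \<le> \<epsilon>"
    using spectral_subspace[of f, OF f_range eps0 H_sub] by blast
  have codim: "real (Codim H') \<le> real (Codim H) + real CARD('p) ^ (Codim H) * 36 / \<beta>^2"
  proof -
    have e1: "M / (N * \<epsilon>^2) = (N / M) * 36 / \<beta>^2"
      unfolding \<epsilon>_def using N0 M0 beta_pos by (simp add: field_simps power2_eq_square)
    have "real m \<le> real (vec.dim H') + (N / M) * 36 / \<beta>^2"
      using dimH' e1 unfolding m_def M_def N_def by simp
    moreover have "vec.dim H' \<le> n" unfolding n_def by (rule dim_le_n)
    moreover have "Codim H = n - m" unfolding Codim_def n_def m_def ..
    moreover have "Codim H' = n - vec.dim H'" unfolding Codim_def n_def ..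
    ultimately show ?thesis using mn NM by (simp add: of_nat_diff)
  qed
  define F where "F = coset_density f H'"
  have F01: "0 \<le> F x \<and> F x \<le> 1" for x unfolding F_def by (rule coset_density_range[OF f_range H'(1)])
  define Tf where "Tf = (\<lambda>g. Tsum (restr f g H))"
  define TF where "TF = (\<lambda>g. Tsum (restr F g H))"
  have TF_eq: "TF g = (\<Sum>y\<in>H. \<Sum>d\<in>H. F (y+g) * F (y+g+d) * F (y+g + 2 *s d))" for g
    unfolding TF_def by (rule Tsum_restr[OF H_sub])
  have TF0: "TF g \<ge> 0" for g unfolding TF_eq using F01 by (intro sum_nonneg mult_nonneg_nonneg) auto
  have err: "\<bar>Tf g - TF g\<bar> \<le> \<beta> * M^2 / 2" for g
  proof -
    have "\<bar>Tf g - TF g\<bar> \<le> 3 * \<epsilon> * N * M"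
      unfolding Tf_def TF_def F_def N_def M_def
      by (rule coset_err[OF p_odd f_range H_sub H'(1) H'(2)]) (use eps0 small in auto)
    also have "\<dots> = \<beta> * M^2 / 2" unfolding \<epsilon>_def using N0 by (simp add: field_simps power2_eq_square)
    finally show ?thesis .
  qed
  have sumTf: "(\<Sum>g\<in>UNIV. Tf g) = M * (\<Sum>x\<in>UNIV. \<Sum>d\<in>H. f x * f (x+d) * f (x + 2 *s d))"
  proof -
    have "(\<Sum>g\<in>UNIV. Tf g) = (\<Sum>g\<in>UNIV. \<Sum>y\<in>H. (\<lambda>x. \<Sum>d\<in>H. f x * f (x+d) * f (x + 2 *s d)) (y+g))"
      unfolding Tf_def by (intro sum.cong refl) (simp add: Tsum_restr[OF H_sub])
    also have "\<dots> = M * (\<Sum>x\<in>UNIV. \<Sum>d\<in>H. f x * f (x+d) * f (x + 2 *s d))"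
      unfolding M_def by (rule double_count)
    finally show ?thesis .
  qed
  have apb: "(\<Sum>x\<in>UNIV. \<Sum>d\<in>H. f x * f (x+d) * f (x + 2 *s d)) \<le> 3 / 2 * M * N * \<beta>"
  proof -
    have s3: "(\<Sum>x\<in>UNIV. (f x)^3) \<le> N * \<alpha>"
    proof -
      have "(\<Sum>x\<in>UNIV. (f x)^3) \<le> (\<Sum>x\<in>UNIV. f x)"
      proof (intro sum_mono)
        fix x
        have "(f x)^3 = f x * (f x)^2" by (simp add: power3_eq_cube power2_eq_square)
        also have "\<dots> \<le> f x * 1" using f_range[of x] by (intro mult_left_mono) (auto simp: power_le_one)
        finally show "(f x)^3 \<le> f x" by simp
      qed
      thus ?thesis unfolding alpha_def N_def using N0 N_def by simp
    qed
    have "(\<Sum>x\<in>UNIV. \<Sum>d\<in>H. f x * f (x+d) * f (x + 2 *s d)) = (M - 1) * N * ap_density f H + (\<Sum>x\<in>UNIV. (f x)^3)"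
      unfolding M_def N_def by (rule ap_sum[OF H_sub cardH2])
    also have "\<dots> \<le> (M - 1) * N * \<beta> + N * \<alpha>"
      using H_lambda M2 N0 s3 by (intro add_mono mult_left_mono) auto
    also have "\<dots> \<le> (M - 1) * N * \<beta> + N * (M * \<beta> / 2)"
      using alpha_le N0 by (intro add_left_mono mult_left_mono) auto
    also have "\<dots> \<le> 3 / 2 * M * N * \<beta>" using N0 beta_pos by (simp add: field_simps)
    finally show ?thesis .
  qed
  have sumTF: "(\<Sum>g\<in>UNIV. TF g) \<le> 2 * M^2 * N * \<beta>"
  proof -
    have "(\<Sum>g\<in>UNIV. TF g) \<le> (\<Sum>g\<in>UNIV. Tf g + \<beta> * M^2 / 2)"
    proof (intro sum_mono)
      fix g
      show "TF g \<le> Tf g + \<beta> * M^2 / 2"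
        using err[of g] abs_ge_minus_self[of "Tf g - TF g"] by linarith
    qed
    also have "\<dots> = (\<Sum>g\<in>UNIV. Tf g) + N * (\<beta> * M^2 / 2)"
      unfolding N_def by (simp add: sum.distrib)
    also have "\<dots> \<le> M * (3 / 2 * M * N * \<beta>) + N * (\<beta> * M^2 / 2)"
      unfolding sumTf using apb M0 by (intro add_right_mono mult_left_mono) auto
    also have "\<dots> = 2 * M^2 * N * \<beta>" by (simp add: power2_eq_square field_simps)
    finally show ?thesis .
  qed
  define \<theta> where "\<theta> = 4 * \<beta> / b"
  have th0: "\<theta> > 0" unfolding \<theta>_def using beta_pos b0 by simp
  define G where "G = {g. TF g \<le> \<theta> * (a g)^3 * M^2}"
  have sum_notG: "(\<Sum>g\<in>UNIV - G. (a g)^3) \<le> N * b / 2"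
  proof -
    have "(\<Sum>g\<in>UNIV - G. (a g)^3) \<le> (\<Sum>g\<in>UNIV - G. TF g / (\<theta> * M^2))"
    proof (intro sum_mono)
      fix g assume "g \<in> UNIV - G"
      hence "TF g > \<theta> * (a g)^3 * M^2" unfolding G_def by simp
      thus "(a g)^3 \<le> TF g / (\<theta> * M^2)" using th0 M0 by (simp add: field_simps)
    qed
    also have "\<dots> \<le> (\<Sum>g\<in>UNIV. TF g / (\<theta> * M^2))"
      using TF0 th0 M0 by (intro sum_mono2) auto
    also have "\<dots> = (\<Sum>g\<in>UNIV. TF g) / (\<theta> * M^2)" by (simp add: sum_divide_distrib)
    also have "\<dots> \<le> 2 * M^2 * N * \<beta> / (\<theta> * M^2)"
      using sumTF th0 M0 by (intro divide_right_mono) auto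
    also have "\<dots> = N * b / 2" unfolding \<theta>_def using M0 b0 beta_pos by (simp add: field_simps power2_eq_square)
    finally show ?thesis .
  qed
  have sum_G: "(\<Sum>g\<in>G. (a g)^3) \<ge> N * b / 2"
  proof -
    have "(\<Sum>g\<in>UNIV. (a g)^3) = N * b" unfolding b_def' using N0 by simp
    moreover have "(\<Sum>g\<in>UNIV. (a g)^3) = (\<Sum>g\<in>G. (a g)^3) + (\<Sum>g\<in>UNIV - G. (a g)^3)"
      by (simp add: sum.subset_diff[of G UNIV])
    ultimately show ?thesis using sum_notG by linarith
  qed
  define K where "K = (8 * \<theta>) powr (- 2 / C)"
  have K0: "K > 0" unfolding K_def using th0 by simp
  define w where "w = (\<lambda>g. (\<Sum>y\<in>H. (F (y+g))^3) / M)"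
  have w0: "w g \<ge> 0" for g unfolding w_def using F01 M0 by (intro divide_nonneg_pos sum_nonneg) auto
  have wG: "w g \<ge> (a g)^3 / 8 * K" if gG: "g \<in> G" for g
  proof (cases "a g > 0")
    case True
    show ?thesis unfolding w_def M_def K_def
    proof (rule cube_increment[OF H_sub _ C_ge C_prop F01 _ True th0])
      show "1 \<le> vec.dim H" using m1 unfolding m_def .
      show "a g = (\<Sum>y\<in>H. F (y+g)) / real (card H)"
        unfolding a_def F_def by (rule avg_F[OF H_sub H'(1) H'(2), symmetric])
      show "(\<Sum>y\<in>H. \<Sum>d\<in>H. F (y+g) * F (y+g+d) * F (y+g + 2 *s d)) \<le> \<theta> * (a g)^3 * (real (card H))^2"
        using gG unfolding G_def TF_eq M_def by simp
    qed
  next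
    case False
    hence "a g = 0" using a01[of g] by simp
    thus ?thesis using w0[of g] by simp
  qed
  have bH': "mean_cube_density f H' = (\<Sum>g\<in>UNIV. w g) / N"
  proof -
    have "(\<Sum>g\<in>UNIV. w g) = (\<Sum>g\<in>UNIV. \<Sum>y\<in>H. (F (y+g))^3) / M"
      unfolding w_def by (simp add: sum_divide_distrib)
    also have "\<dots> = (\<Sum>x\<in>UNIV. (F x)^3)"
      using double_count[of "\<lambda>x. (F x)^3" H] M0 subspace_ne[OF H_sub] unfolding M_def by simp
    finally show ?thesis unfolding mean_cube_density_def F_def N_def by simp
  qed
  have "N * b / 2 * (K / 8) \<le> (\<Sum>g\<in>G. (a g)^3) * (K / 8)"
    using sum_G K0 by (intro mult_right_mono) auto
  also have "\<dots> = (\<Sum>g\<in>G. (a g)^3 / 8 * K)"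
    by (simp only: sum_distrib_right) (intro sum.cong refl, simp)
  also have "\<dots> \<le> (\<Sum>g\<in>G. w g)" by (intro sum_mono wG)
  also have "\<dots> \<le> (\<Sum>g\<in>UNIV. w g)" using w0 by (intro sum_mono2) auto
  finally have "mean_cube_density f H' \<ge> b * K / 16"
    unfolding bH' using N0 by (simp add: field_simps)
  hence "mean_cube_density f H' / \<beta> \<ge> b * K / 16 / \<beta>"
    using beta_pos by (intro divide_right_mono) auto
  moreover have "b * K / 16 / \<beta> > (b / \<beta>) powr (1 + 1 / (2 * C))"
    unfolding K_def \<theta>_def by (rule final_ineq[OF beta_pos C_ge b_ge])
  ultimately have "mean_cube_density f H' / \<beta> > (mean_cube_density f H / \<beta>) powr (1 + 1 / (2 * C))"
    unfolding b_def by linarith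
  thus ?thesis using H' codim by blast
qed

end
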